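(* In the smooth setting described in the context (with $u$ convex), let $R_0\ge\|x^0-x^*\|$ and let $\{x^t\}_{t=1}^N$ be generated by the smooth DRAO-S method with stepsizes $$w_t=t,\ \theta_t=\tfrac{t-1}{t},\ \tau_t=\tfrac{t-1}{2},\ \eta_t=\tfrac{2L_f}{t},\quad \Delta>0,\ S_t=\lceil t\Delta M_t\rceil,\ \bar M_t=\tfrac{S_t}{t\Delta},\ \beta_s^t=\tfrac{D_P\bar M_t}{R_0},\ \gamma_s^t=\tfrac{R_0\bar M_t}{D_P},$$ $q_s^t=1$, $\delta_1^t=\bar M_t/\bar M_{t-1}$ if $t\ge2$, $\delta_1^1=1$, and $\delta_s^t=1$ for all $s\ge2$. Then $$f(\bar x^N)-f(x^* )\le\frac{2L_fR_0^2}{N(N+1)}+\frac{2D_PR_0}{N(N+1)\Delta}\quad\forall N\ge1,$$ and there exists a uniform bound $\tilde M$ with $M_t\le\tilde M$ for all $t\ge1$. In addition, if $\Delta=D_P/(L_fR_0)$, then $f(\bar x^N)-f(x^* )\le 4L_fR_0^2/(N(N+1))$ for all $N\ge1$.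
   Context: Problem: $X\subseteq\mathbb{R}^n$ closed convex; $P\subseteq\Delta_m^+=\{p\in\mathbb{R}^m:\sum_ip_i=1,p\ge0\}$ closed convex; $\rho^*$ proper closed convex on $P$; $u$ proper closed convex on $\mathbb{R}^n$. Smooth setting: each $f_i:\mathbb{R}^n\to\mathbb{R}$ convex with Lipschitz continuous gradient, $f_i^*$ its Fenchel conjugate. The problem is $\min_{x\in X}\{f(x):=\max_{p\in P}\sum_ip_if_i(x)-\rho^*(p)+u(x)\}$ with nonempty optimal set and optimal solution $x^*$. $L_p$ is the Lipschitz constant of $\nabla\sum_ip_if_i$ and $L_f=\max_{p\in P}L_p$. $U(\cdot;\cdot)$ is a Bregman distance on $P$ that is 1-strongly convex with respect to a norm $\|\cdot\|_U$ on $\mathbb{R}^m$; $D_P=\max_{p,\bar p\in P}\sqrt{2U(p,\bar p)}$. Smooth DRAO-S method: given $x^0\in X$ and $p_{\rm init}\in P$, set $x^{-1}=\underline{x}^0=x^0$, $y^{1,0}=x^0$, $p^{1,0}=p^{1,-1}=p_{\rm init}$, and for $t\ge2$: $y^{t,0}=y^{t-1,S_{t-1}}$, $p^{t,0}=p^{t-1,S_{t-1}}$, $p^{t,-1}=p^{t-1,S_{t-1}-1}$. Phase $t=1,\dots,N$: $\tilde x^t=x^{t-1}+\theta_t(x^{t-1}-x^{t-2})$; $\underline{x}^t=(\tilde x^t+\tau_t\underline{x}^{t-1})/(1+\tau_t)$; $v_i^t=\nabla f_i(\underline{x}^t)$, $c_i^t=\langle\underline{x}^t,v_i^t\rangle-f_i(\underline{x}^t)$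 ($=f_i^*(v_i^t)$); set $v_i^0:=v_i^1$. Then for $s=1,\dots,S_t$: $\tilde v^{t,s}=\sum_ip_i^{t,s-1}v_i^t+\delta_s^t\sum_i(p_i^{t,s-1}-p_i^{t,s-2})v_i^{t'}$ with $t'=t-1$ if $s=1$ and $t'=t$ if $s\ge2$; $y^{t,s}=\arg\min_{y\in X}\langle y,\tilde v^{t,s}\rangle+u(y)+\frac{\beta_s^t}{2}\|y-y^{t,s-1}\|^2+\frac{\eta_t}{2}\|y-x^{t-1}\|^2$; $p^{t,s}=\arg\max_{p\in P}\sum_ip_i(\langle v_i^t,y^{t,s}\rangle-c_i^t)-\rho^*(p)-\gamma_s^tU(p;p^{t,s-1})$. Then $x^t=\sum_sq_s^ty^{t,s}/\sum_sq_s^t$. Output $\bar x^N=\sum_tw_tx^t/\sum_tw_t$. Also $M_t=\max\{\sum_ip_i\langle v_i^t,y\rangle:p\in\mathbb{R}^m,\|p\|_U\le1,y\in\mathbb{R}^n,\|y\|_2\le1\}$. *)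

theory Defs
  imports "HOL-Analysis.Analysis" "HOL-Library.Extended_Real"
begin

definition eproper_on :: "'a set \<Rightarrow> ('a \<Rightarrow> ereal) \<Rightarrow> bool" where
  "eproper_on S g \<longleftrightarrow> (\<forall>x\<in>S. g x \<noteq> -\<infinity>) \<and> (\<exists>x\<in>S. g x \<noteq> \<infinity>)"

definition econvex_on :: "'a::real_vector set \<Rightarrow> ('a \<Rightarrow> ereal) \<Rightarrow> bool" where
  "econvex_on S g \<longleftrightarrow> convex S \<and>
     (\<forall>x\<in>S. \<forall>y\<in>S. \<forall>t::real. 0 < t \<and> t < 1 \<longrightarrow>
        g ((1 - t) *\<^sub>R x + t *\<^sub>R y) \<le> ereal (1 - t) * g x + ereal t * g y)"

definition eclosed_on :: "'a::topological_space set \<Rightarrow> ('a \<Rightarrow> ereal) \<Rightarrow> bool" where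
  "eclosed_on S g \<longleftrightarrow> closed {(x, r::real). x \<in> S \<and> g x \<le> ereal r}"

definition is_norm :: "('a::real_vector \<Rightarrow> real) \<Rightarrow> bool" where
  "is_norm N \<longleftrightarrow> (\<forall>x. N x = 0 \<longleftrightarrow> x = 0) \<and> (\<forall>x y. N (x + y) \<le> N x + N y)
      \<and> (\<forall>c x. N (c *\<^sub>R x) = \<bar>c\<bar> * N x)"

definition lip_const :: "('a::metric_space \<Rightarrow> 'b::metric_space) \<Rightarrow> real" where
  "lip_const g = Inf {L. L-lipschitz_on UNIV g}"

definition breg :: "('a::real_inner \<Rightarrow> real) \<Rightarrow> ('a \<Rightarrow> 'a) \<Rightarrow> 'a \<Rightarrow> 'a \<Rightarrow> real" where
  "breg \<omega> g\<omega> p q = \<omega> p - \<omega> q - g\<omega> q \<bullet> (p - q)"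

definition prob_simplex :: "(real^'m::finite) set" where
  "prob_simplex = {p. (\<Sum>i\<in>UNIV. p $ i) = 1 \<and> (\<forall>i. 0 \<le> p $ i)}"

definition Mconst :: "(real^'m::finite \<Rightarrow> real) \<Rightarrow> ('m \<Rightarrow> real^'n::finite) \<Rightarrow> real" where
  "Mconst NU V = Sup {(\<Sum>i\<in>UNIV. p $ i * (V i \<bullet> y)) | p y. NU p \<le> 1 \<and> norm y \<le> 1}"

definition fobj :: "(real^'m::finite) set \<Rightarrow> ('m \<Rightarrow> 'a \<Rightarrow> real) \<Rightarrow> (real^'m \<Rightarrow> ereal)
    \<Rightarrow> ('a \<Rightarrow> ereal) \<Rightarrow> 'a \<Rightarrow> ereal" where
  "fobj P f \<rho> u x = (SUP q\<in>P. ereal (\<Sum>i\<in>UNIV. q $ i * f i x) - \<rho> q) + u x"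

end

theory Submission
  imports Defs
begin

lemma is_norm_basic:
  fixes N :: "'a::real_vector \<Rightarrow> real"
  assumes "is_norm N"
  shows "N 0 = 0" "N (-x) = N x" "N x \<ge> 0" "N (x - y) = N (y - x)"
proof -
  have h: "\<And>c x. N (c *\<^sub>R x) = \<bar>c\<bar> * N x" and t: "\<And>x y. N (x + y) \<le> N x + N y"
    using assms unfolding is_norm_def by auto
  show "N 0 = 0" using h[of 0 0] by simp
  show n: "N (-x) = N x" using h[of "-1" x] by simp
  have "N 0 \<le> N x + N (-x)" using t[of x "-x"] by simp
  then show "N x \<ge> 0" using n h[of 0 0] by simp
  show "N (x - y) = N (y - x)" using h[of "-1" "x - y"] by simp
qed

lemma is_norm_convex:
  fixes N :: "'a::real_vector \<Rightarrow> real"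
  assumes "is_norm N"
  shows "convex_on UNIV N"
proof (rule convex_onI)
  fix t::real and x y assume t: "0 < t" "t < 1"
  have h: "\<And>c x. N (c *\<^sub>R x) = \<bar>c\<bar> * N x" and tr: "\<And>x y. N (x + y) \<le> N x + N y"
    using assms unfolding is_norm_def by auto
  have "N ((1 - t) *\<^sub>R x + t *\<^sub>R y) \<le> N ((1 - t) *\<^sub>R x) + N (t *\<^sub>R y)" by (rule tr)
  also have "\<dots> = (1 - t) * N x + t * N y" using h t by simp
  finally show "N ((1 - t) *\<^sub>R x + t *\<^sub>R y) \<le> (1 - t) * N x + t * N y" .
qed auto

lemma norm_equiv:
  fixes N :: "real^'m::finite \<Rightarrow> real"
  assumes "is_norm N"
  shows "\<exists>C>0. \<forall>p. norm p \<le> C * N p"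
proof -
  have cont: "continuous_on UNIV N"
    by (rule convex_on_continuous) (auto intro: is_norm_convex assms)
  obtain i :: 'm where True by auto
  have ne: "sphere (0::real^'m) 1 \<noteq> {}"
    using norm_axis_1[of i] by (auto simp: sphere_def intro!: exI[of _ "axis i 1"])
  obtain x0 where x0: "x0 \<in> sphere 0 1" and mn: "\<And>y. y \<in> sphere 0 1 \<Longrightarrow> N x0 \<le> N y"
    using continuous_attains_inf[OF compact_sphere ne continuous_on_subset[OF cont]] by blast
  have "x0 \<noteq> 0" using x0 by auto
  then have pos: "N x0 > 0" using is_norm_basic(3)[OF assms, of x0] assms unfolding is_norm_def
    by (metis order_le_less)
  have h: "\<And>c x. N (c *\<^sub>R x) = \<bar>c\<bar> * N x" using assms unfolding is_norm_def by auto
  have "norm p \<le> (1 / N x0) * N p" for p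
  proof (cases "p = 0")
    case True then show ?thesis using is_norm_basic(1)[OF assms] by simp
  next
    case False
    then have np: "norm p > 0" by simp
    have "(1 / norm p) *\<^sub>R p \<in> sphere 0 1" using np by (simp add: sphere_def)
    then have "N x0 \<le> N ((1 / norm p) *\<^sub>R p)" by (rule mn)
    also have "\<dots> = N p / norm p" using h np by simp
    finally have "N x0 * norm p \<le> N p" using np by (simp add: field_simps)
    then show ?thesis using pos by (simp add: field_simps mult.commute)
  qed
  then show ?thesis using pos by (intro exI[of _ "1 / N x0"]) auto
qed

lemma Mconst_elem_bound:
  fixes N :: "real^'m::finite \<Rightarrow> real" and V :: "'m \<Rightarrow> real^'n::finite"
  assumes "norm p \<le> C * N p" "N p \<le> 1" "norm y \<le> 1" "C \<ge> 0" "N p \<ge> 0"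
  shows "(\<Sum>i\<in>UNIV. p $ i * (V i \<bullet> y)) \<le> C * (\<Sum>i\<in>UNIV. norm (V i))"
proof -
  have "(\<Sum>i\<in>UNIV. p $ i * (V i \<bullet> y)) \<le> (\<Sum>i\<in>UNIV. C * norm (V i))"
  proof (rule sum_mono)
    fix i
    have "p $ i * (V i \<bullet> y) \<le> \<bar>p $ i\<bar> * \<bar>V i \<bullet> y\<bar>" by (simp add: abs_mult[symmetric])
    also have "\<dots> \<le> (C * N p) * (norm (V i) * norm y)"
      apply (rule mult_mono)
      using component_le_norm_cart[of p i] assms Cauchy_Schwarz_ineq2[of "V i" y] by auto
    also have "\<dots> \<le> C * norm (V i)"
    proof -
      have "N p * norm y \<le> 1" using assms by (intro mult_le_one) auto
      then have "C * norm (V i) * (N p * norm y) \<le> C * norm (V i)"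
        using assms(4) by (simp add: mult_left_le)
      then show ?thesis by (simp add: algebra_simps)
    qed
    finally show "p $ i * (V i \<bullet> y) \<le> C * norm (V i)" .
  qed
  then show ?thesis by (simp add: sum_distrib_left)
qed

lemma Mconst_bdd:
  fixes N :: "real^'m::finite \<Rightarrow> real" and V :: "'m \<Rightarrow> real^'n::finite"
  assumes "is_norm N"
  obtains C where "C > 0"
    "\<And>x. x \<in> {(\<Sum>i\<in>UNIV. p $ i * (V i \<bullet> y)) | p y. N p \<le> 1 \<and> norm y \<le> 1} \<Longrightarrow> x \<le> C * (\<Sum>i\<in>UNIV. norm (V i))"
proof -
  obtain C where C: "C > 0" "\<And>p. norm p \<le> C * N p" using norm_equiv[OF assms] by blast
  have "x \<le> C * (\<Sum>i\<in>UNIV. norm (V i))"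
    if xin: "x \<in> {(\<Sum>i\<in>UNIV. p $ i * (V i \<bullet> y)) | p y. N p \<le> 1 \<and> norm y \<le> 1}" for x
  proof -
    obtain p y where "x = (\<Sum>i\<in>UNIV. p $ i * (V i \<bullet> y))" "N p \<le> 1" "norm y \<le> 1" using xin by blast
    then show "x \<le> C * (\<Sum>i\<in>UNIV. norm (V i))"
      using Mconst_elem_bound[where N=N and C=C and p=p and y=y and V=V, OF C(2)[of p]] C(1) is_norm_basic(3)[OF assms, of p] by simp
  qed
  then show ?thesis using that C(1) by blast
qed

lemma Mconst_set_ne:
  fixes N :: "real^'m::finite \<Rightarrow> real" and V :: "'m \<Rightarrow> real^'n::finite"
  assumes "is_norm N"
  shows "0 \<in> {(\<Sum>i\<in>UNIV. p $ i * (V i \<bullet> y)) | p y. N p \<le> 1 \<and> norm y \<le> 1}"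
proof -
  have "(\<Sum>i\<in>UNIV. (0::real^'m) $ i * (V i \<bullet> (0::real^'n))) \<in> {(\<Sum>i\<in>UNIV. p $ i * (V i \<bullet> y)) | p y. N p \<le> 1 \<and> norm y \<le> 1}"
    apply (rule CollectI) apply (rule exI[of _ 0], rule exI[of _ 0]) using is_norm_basic(1)[OF assms] by simp
  then show ?thesis by simp
qed

lemma Mconst_upper:
  fixes N :: "real^'m::finite \<Rightarrow> real" and V :: "'m \<Rightarrow> real^'n::finite"
  assumes "is_norm N" "N p \<le> 1" "norm y \<le> 1"
  shows "(\<Sum>i\<in>UNIV. p $ i * (V i \<bullet> y)) \<le> Mconst N V"
proof -
  obtain C where C: "\<And>x. x \<in> {(\<Sum>i\<in>UNIV. p $ i * (V i \<bullet> y)) | p y. N p \<le> 1 \<and> norm y \<le> 1} \<Longrightarrow> x \<le> C * (\<Sum>i\<in>UNIV. norm (V i))"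
    using Mconst_bdd[OF assms(1), of V] by blast
  have bd: "bdd_above {(\<Sum>i\<in>UNIV. p $ i * (V i \<bullet> y)) | p y. N p \<le> 1 \<and> norm y \<le> 1}"
    by (rule bdd_aboveI[of _ "C * (\<Sum>i\<in>UNIV. norm (V i))"]) (rule C)
  show ?thesis unfolding Mconst_def
    by (rule cSup_upper[OF _ bd]) (use assms in blast)
qed

lemma Mconst_nonneg:
  fixes N :: "real^'m::finite \<Rightarrow> real" and V :: "'m \<Rightarrow> real^'n::finite"
  assumes "is_norm N"
  shows "Mconst N V \<ge> 0"
  using Mconst_upper[OF assms, of 0 0 V] is_norm_basic(1)[OF assms] by simp

lemma Mconst_le:
  fixes N :: "real^'m::finite \<Rightarrow> real"
  assumes "is_norm N"
  obtains C where "C > 0" "\<And>V::'m \<Rightarrow> real^'n::finite. Mconst N V \<le> C * (\<Sum>i\<in>UNIV. norm (V i))"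
proof -
  obtain C where C: "C > 0" "\<And>p. norm p \<le> C * N p" using norm_equiv[OF assms] by blast
  have "Mconst N V \<le> C * (\<Sum>i\<in>UNIV. norm (V i))" for V :: "'m \<Rightarrow> real^'n::finite"
    unfolding Mconst_def
  proof (rule cSup_least)
    show "{(\<Sum>i\<in>UNIV. p $ i * (V i \<bullet> y)) | p y. N p \<le> 1 \<and> norm y \<le> 1} \<noteq> {}"
      using Mconst_set_ne[OF assms, of V] by blast
    fix x assume "x \<in> {(\<Sum>i\<in>UNIV. p $ i * (V i \<bullet> y)) | p y. N p \<le> 1 \<and> norm y \<le> 1}"
    then obtain p y where "x = (\<Sum>i\<in>UNIV. p $ i * (V i \<bullet> y))" "N p \<le> 1" "norm y \<le> 1" by blast
    then show "x \<le> C * (\<Sum>i\<in>UNIV. norm (V i))"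
      using Mconst_elem_bound[where N=N and C=C and p=p and y=y and V=V, OF C(2)[of p]] C(1) is_norm_basic(3)[OF assms, of p] by simp
  qed
  then show ?thesis using that C(1) by blast
qed

lemma Mconst_bilinear:
  fixes N :: "real^'m::finite \<Rightarrow> real" and V :: "'m \<Rightarrow> real^'n::finite"
  assumes "is_norm N"
  shows "(\<Sum>i\<in>UNIV. d $ i * (V i \<bullet> y)) \<le> Mconst N V * N d * norm y"
proof -
  have h: "\<And>c x. N (c *\<^sub>R x) = \<bar>c\<bar> * N x" and z: "\<And>x. N x = 0 \<longleftrightarrow> x = 0"
    using assms unfolding is_norm_def by auto
  show ?thesis
  proof (cases "d = 0 \<or> y = 0")
    case True then show ?thesis using is_norm_basic(1)[OF assms] by auto
  next
    case False
    then have "N d \<noteq> 0" using z by blast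
    then have nd: "N d > 0" using is_norm_basic(3)[OF assms, of d] by linarith
    have ny: "norm y > 0" using False by simp
    let ?p = "(1 / N d) *\<^sub>R d" and ?y = "(1 / norm y) *\<^sub>R y"
    have "N ?p \<le> 1" using h[of "1 / N d" d] nd by simp
    moreover have "norm ?y \<le> 1" using ny by simp
    ultimately have "(\<Sum>i\<in>UNIV. ?p $ i * (V i \<bullet> ?y)) \<le> Mconst N V"
      by (rule Mconst_upper[OF assms])
    moreover have "(\<Sum>i\<in>UNIV. ?p $ i * (V i \<bullet> ?y)) = (\<Sum>i\<in>UNIV. d $ i * (V i \<bullet> y)) / (N d * norm y)"
      by (simp add: sum_divide_distrib)
    ultimately show ?thesis using nd ny by (simp add: pos_divide_le_eq mult.assoc)
  qed
qed

lemma line_deriv: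
  fixes F :: "'a::real_inner \<Rightarrow> real"
  assumes "\<And>z. (F has_derivative (\<lambda>h. G z \<bullet> h)) (at z)"
  shows "((\<lambda>s. F (y + s *\<^sub>R d)) has_real_derivative (G (y + s *\<^sub>R d) \<bullet> d)) (at s within T)"
proof -
  have l: "((\<lambda>s. y + s *\<^sub>R d) has_derivative (\<lambda>s. s *\<^sub>R d)) (at s within T)"
    by (auto intro!: derivative_eq_intros)
  have "((\<lambda>s. F (y + s *\<^sub>R d)) has_derivative (\<lambda>t. G (y + s *\<^sub>R d) \<bullet> (t *\<^sub>R d))) (at s within T)"
    by (rule has_derivative_compose[OF l assms])
  moreover have "(\<lambda>t. G (y + s *\<^sub>R d) \<bullet> (t *\<^sub>R d)) = (*) (G (y + s *\<^sub>R d) \<bullet> d)"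
    by (auto simp: mult.commute)
  ultimately show ?thesis by (simp add: has_field_derivative_def)
qed

lemma convex_line:
  fixes F :: "'a::real_vector \<Rightarrow> real"
  assumes "convex_on UNIV F"
  shows "convex_on UNIV (\<lambda>s::real. F (y + s *\<^sub>R d))"
proof (rule convex_onI)
  fix t :: real and a b :: real assume t: "0 < t" "t < 1"
  have "y + ((1 - t) * a + t * b) *\<^sub>R d = (1 - t) *\<^sub>R (y + a *\<^sub>R d) + t *\<^sub>R (y + b *\<^sub>R d)"
    by (simp add: algebra_simps)
  moreover have "F ((1 - t) *\<^sub>R (y + a *\<^sub>R d) + t *\<^sub>R (y + b *\<^sub>R d)) \<le> (1 - t) * F (y + a *\<^sub>R d) + t * F (y + b *\<^sub>R d)"
    using convex_onD[OF assms, of t "y + a *\<^sub>R d" "y + b *\<^sub>R d"] t by simp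
  ultimately show "F (y + ((1 - t) *\<^sub>R a + t *\<^sub>R b) *\<^sub>R d) \<le> (1 - t) * F (y + a *\<^sub>R d) + t * F (y + b *\<^sub>R d)"
    by simp
qed simp

lemma grad_ineq:
  fixes F :: "'a::real_inner \<Rightarrow> real"
  assumes "convex_on UNIV F" "\<And>z. (F has_derivative (\<lambda>h. G z \<bullet> h)) (at z)"
  shows "F x \<ge> F y + G y \<bullet> (x - y)"
proof -
  let ?h = "\<lambda>s::real. F (y + s *\<^sub>R (x - y))"
  have "?h 1 - ?h 0 \<ge> (G (y + 0 *\<^sub>R (x - y)) \<bullet> (x - y)) * (1 - 0)"
  proof (rule convex_on_imp_above_tangent[OF convex_line[OF assms(1)]])
    show "(?h has_real_derivative G (y + 0 *\<^sub>R (x - y)) \<bullet> (x - y)) (at 0 within UNIV)"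
      by (rule line_deriv[OF assms(2)])
  qed auto
  then show ?thesis by simp
qed

lemma descent:
  fixes F :: "'a::real_inner \<Rightarrow> real"
  assumes "\<And>z. (F has_derivative (\<lambda>h. G z \<bullet> h)) (at z)" "L-lipschitz_on UNIV G"
  shows "F x \<le> F y + G y \<bullet> (x - y) + L / 2 * (norm (x - y))\<^sup>2"
proof -
  define d where "d = x - y"
  let ?k = "\<lambda>s. F (y + s *\<^sub>R d) - s * (G y \<bullet> d) - L / 2 * s\<^sup>2 * (norm d)\<^sup>2"
  have "?k 1 \<le> ?k 0"
  proof (rule DERIV_nonpos_imp_nonincreasing[of 0 1])
    fix s :: real assume s: "0 \<le> s" "s \<le> 1"
    have D: "(?k has_real_derivative (G (y + s *\<^sub>R d) \<bullet> d - G y \<bullet> d - L * s * (norm d)\<^sup>2)) (at s)"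
      using line_deriv[OF assms(1), of y d s UNIV]
      by (auto intro!: derivative_eq_intros simp: power2_eq_square)
    have "(G (y + s *\<^sub>R d) - G y) \<bullet> d \<le> norm (G (y + s *\<^sub>R d) - G y) * norm d"
      by (rule norm_cauchy_schwarz)
    also have "norm (G (y + s *\<^sub>R d) - G y) \<le> L * norm (s *\<^sub>R d)"
      using lipschitz_onD[OF assms(2), of "y + s *\<^sub>R d" y] by (simp add: dist_norm)
    then have "norm (G (y + s *\<^sub>R d) - G y) * norm d \<le> L * norm (s *\<^sub>R d) * norm d"
      by (simp add: mult_right_mono)
    also have "\<dots> = L * s * (norm d)\<^sup>2" using s by (simp add: power2_eq_square)
    finally have "G (y + s *\<^sub>R d) \<bullet> d - G y \<bullet> d - L * s * (norm d)\<^sup>2 \<le> 0"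
      by (simp add: inner_diff_left)
    then show "\<exists>y. (?k has_real_derivative y) (at s) \<and> y \<le> 0" using D by blast
  qed simp
  then show ?thesis by (simp add: d_def)
qed

lemma cocoercive:
  fixes F :: "'a::real_inner \<Rightarrow> real"
  assumes "convex_on UNIV F" "\<And>z. (F has_derivative (\<lambda>h. G z \<bullet> h)) (at z)" "L-lipschitz_on UNIV G"
  shows "(norm (G x - G y))\<^sup>2 \<le> 2 * L * (F x - F y - G y \<bullet> (x - y))"
proof (cases "L = 0")
  case True
  then have "G x = G y" using lipschitz_onD[OF assms(3), of x y] by simp
  then show ?thesis using True by simp
next
  case False
  then have L: "L > 0" using lipschitz_on_nonneg[OF assms(3)] by simp
  define g where "g = G x - G y"
  define w where "w = x - (1 / L) *\<^sub>R g"
  have a: "F w \<ge> F y + G y \<bullet> (w - y)" by (rule grad_ineq[OF assms(1,2)])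
  have b: "F w \<le> F x + G x \<bullet> (w - x) + L / 2 * (norm (w - x))\<^sup>2" by (rule descent[OF assms(2,3)])
  have e1: "G y \<bullet> (w - y) = G y \<bullet> (x - y) - (1 / L) * (G y \<bullet> g)"
    by (simp add: w_def inner_diff_right)
  have e2: "G x \<bullet> (w - x) = - (1 / L) * (G x \<bullet> g)" by (simp add: w_def)
  have e3: "(norm (w - x))\<^sup>2 = (norm g)\<^sup>2 / L\<^sup>2" using L by (simp add: w_def power_divide)
  have e4: "G x \<bullet> g - G y \<bullet> g = (norm g)\<^sup>2"
    by (simp add: g_def inner_diff_left[symmetric] power2_norm_eq_inner)
  have "F y + G y \<bullet> (x - y) - (1 / L) * (G y \<bullet> g) \<le> F x - (1 / L) * (G x \<bullet> g) + L / 2 * ((norm g)\<^sup>2 / L\<^sup>2)"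
    using a b e1 e2 e3 by (simp only:)
  then have "(1 / L) * (G x \<bullet> g - G y \<bullet> g) - L / 2 * ((norm g)\<^sup>2 / L\<^sup>2) \<le> F x - F y - G y \<bullet> (x - y)"
    by (simp add: algebra_simps)
  then have "(1 / L) * (norm g)\<^sup>2 - (1 / (2 * L)) * (norm g)\<^sup>2 \<le> F x - F y - G y \<bullet> (x - y)"
    using L e4 by (simp add: power2_eq_square field_simps)
  then have "(1 / (2 * L)) * (norm g)\<^sup>2 \<le> F x - F y - G y \<bullet> (x - y)"
    using L by (simp add: field_simps)
  then show ?thesis using L by (simp add: g_def field_simps)
qed

lemma small_param:
  fixes K C :: real
  assumes "\<And>l. 0 < l \<Longrightarrow> l < 1 \<Longrightarrow> 0 \<le> K + l * C" "C \<ge> 0"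
  shows "K \<ge> 0"
proof (rule ccontr)
  assume "\<not> K \<ge> 0"
  then have K: "K < 0" by simp
  define l where "l = min (1/2) (- K / (2 * (C + 1)))"
  have "- K / (2 * (C + 1)) > 0" using K assms(2) by (intro divide_pos_pos) auto
  then have l0: "0 < l" "l < 1" by (auto simp: l_def)
  have "l * C \<le> (- K / (2 * (C + 1))) * C" using assms(2) by (intro mult_right_mono) (auto simp: l_def)
  also have "\<dots> < - K"
  proof -
    have "C / (C + 1) < 2" using assms(2) by (simp add: divide_less_eq)
    then have "(- K) * (C / (C + 1)) < (- K) * 2" using K by (intro mult_strict_left_mono) auto
    then show ?thesis using assms(2) by (simp add: field_simps)
  qed
  finally show False using assms(1)[OF l0] by linarith
qed

lemma norm_sq_plus:
  fixes x y :: "'a::real_inner"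
  shows "(norm (x + y))\<^sup>2 = (norm x)\<^sup>2 + 2 * (x \<bullet> y) + (norm y)\<^sup>2"
  by (simp add: power2_norm_eq_inner inner_add_left inner_add_right inner_commute)

lemma norm_sq_plus_scale:
  fixes x e :: "'a::real_inner"
  shows "(norm (x + l *\<^sub>R e))\<^sup>2 = (norm x)\<^sup>2 + 2 * l * (x \<bullet> e) + l\<^sup>2 * (norm e)\<^sup>2"
  using norm_sq_plus[of x "l *\<^sub>R e"] by (simp add: power_mult_distrib)

lemma three_pt_id:
  fixes y z a :: "'a::real_inner"
  shows "2 * ((y - a) \<bullet> (z - y)) = (norm (z - a))\<^sup>2 - (norm (y - a))\<^sup>2 - (norm (z - y))\<^sup>2"
proof -
  have "z - a = (y - a) + (z - y)" by simp
  then have "(norm (z - a))\<^sup>2 = (norm (y - a))\<^sup>2 + 2 * ((y - a) \<bullet> (z - y)) + (norm (z - y))\<^sup>2"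
    by (metis norm_sq_plus)
  then show ?thesis by simp
qed

lemma econvex_real:
  fixes u :: "'a::real_vector \<Rightarrow> ereal"
  assumes "econvex_on S u" "x \<in> S" "y \<in> S" "u x = ereal ux" "u y = ereal uy" "0 < t" "t < 1"
  shows "u ((1 - t) *\<^sub>R x + t *\<^sub>R y) \<le> ereal ((1 - t) * ux + t * uy)"
proof -
  have "u ((1 - t) *\<^sub>R x + t *\<^sub>R y) \<le> ereal (1 - t) * u x + ereal t * u y"
    using assms unfolding econvex_on_def by blast
  then show ?thesis using assms(4,5) by simp
qed

lemma primal_3pt:
  fixes X :: "'a::real_inner set" and u :: "'a \<Rightarrow> ereal"
  assumes X: "convex X" and uc: "econvex_on UNIV u" and un: "\<And>x. u x \<noteq> -\<infinity>"
    and ys: "ys \<in> X" and z: "z \<in> X" and uz: "u z = ereal uzr" and be: "\<beta> \<ge> 0" "\<eta> \<ge> 0"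
    and opt: "\<forall>z\<in>X. ereal (ys \<bullet> v) + u ys + ereal (\<beta> / 2 * (norm (ys - a))\<^sup>2 + \<eta> / 2 * (norm (ys - b))\<^sup>2)
          \<le> ereal (z \<bullet> v) + u z + ereal (\<beta> / 2 * (norm (z - a))\<^sup>2 + \<eta> / 2 * (norm (z - b))\<^sup>2)"
  shows "\<exists>uyr. u ys = ereal uyr \<and>
     (ys - z) \<bullet> v + uyr - uzr + \<beta> / 2 * (norm (ys - a))\<^sup>2 + \<eta> / 2 * (norm (ys - b))\<^sup>2
       + (\<beta> + \<eta>) / 2 * (norm (z - ys))\<^sup>2 \<le> \<beta> / 2 * (norm (z - a))\<^sup>2 + \<eta> / 2 * (norm (z - b))\<^sup>2"
proof -
  have "u ys \<noteq> \<infinity>"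
  proof
    assume "u ys = \<infinity>"
    then show False using opt z uz by auto
  qed
  then obtain uy where uy: "u ys = ereal uy" using un[of ys] by (cases "u ys") auto
  define e where "e = z - ys"
  define Q where "Q = (\<lambda>w. \<beta> / 2 * (norm (w - a))\<^sup>2 + \<eta> / 2 * (norm (w - b))\<^sup>2)"
  define K where "K = e \<bullet> v + uzr - uy + \<beta> * ((ys - a) \<bullet> e) + \<eta> * ((ys - b) \<bullet> e)"
  have Kl: "0 \<le> K + l * ((\<beta> + \<eta>) / 2 * (norm e)\<^sup>2)" if l: "0 < l" "l < 1" for l
  proof -
    define w where "w = (1 - l) *\<^sub>R ys + l *\<^sub>R z"
    have w: "w \<in> X" using X ys z l unfolding w_def by (simp add: convex_def)
    have uw: "u w \<le> ereal ((1 - l) * uy + l * uzr)"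
      unfolding w_def by (rule econvex_real[OF uc _ _ uy uz l]) auto
    have "ereal (ys \<bullet> v) + ereal uy + ereal (Q ys) \<le> ereal (w \<bullet> v) + u w + ereal (Q w)"
      using opt w uy unfolding Q_def by auto
    also have "\<dots> \<le> ereal (w \<bullet> v) + ereal ((1 - l) * uy + l * uzr) + ereal (Q w)"
      using uw by (intro add_mono) auto
    finally have r: "ys \<bullet> v + uy + Q ys \<le> w \<bullet> v + ((1 - l) * uy + l * uzr) + Q w" by simp
    have we: "w = ys + l *\<^sub>R e" unfolding w_def e_def by (simp add: algebra_simps)
    have q1: "(norm (w - a))\<^sup>2 = (norm (ys - a))\<^sup>2 + 2 * l * ((ys - a) \<bullet> e) + l\<^sup>2 * (norm e)\<^sup>2"
    proof -
      have wa: "w - a = (ys - a) + l *\<^sub>R e" using we by simp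
      show ?thesis unfolding wa by (rule norm_sq_plus_scale)
    qed
    have q2: "(norm (w - b))\<^sup>2 = (norm (ys - b))\<^sup>2 + 2 * l * ((ys - b) \<bullet> e) + l\<^sup>2 * (norm e)\<^sup>2"
    proof -
      have wa: "w - b = (ys - b) + l *\<^sub>R e" using we by simp
      show ?thesis unfolding wa by (rule norm_sq_plus_scale)
    qed
    have wv: "w \<bullet> v = ys \<bullet> v + l * (e \<bullet> v)" using we by (simp add: inner_add_left)
    have "0 \<le> l * K + l\<^sup>2 * ((\<beta> + \<eta>) / 2 * (norm e)\<^sup>2)"
      using r unfolding Q_def K_def q1 q2 wv by (simp add: algebra_simps power2_eq_square add_divide_distrib)
    then have "0 \<le> l * (K + l * ((\<beta> + \<eta>) / 2 * (norm e)\<^sup>2))" by (simp add: algebra_simps power2_eq_square)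
    then show ?thesis using l by (simp add: zero_le_mult_iff)
  qed
  have C0: "(\<beta> + \<eta>) / 2 * (norm e)\<^sup>2 \<ge> 0" using be by simp
  have K: "K \<ge> 0" by (rule small_param[OF Kl C0])
  have i1: "2 * ((ys - a) \<bullet> e) = (norm (z - a))\<^sup>2 - (norm (ys - a))\<^sup>2 - (norm (z - ys))\<^sup>2"
    unfolding e_def by (rule three_pt_id)
  have i2: "2 * ((ys - b) \<bullet> e) = (norm (z - b))\<^sup>2 - (norm (ys - b))\<^sup>2 - (norm (z - ys))\<^sup>2"
    unfolding e_def by (rule three_pt_id)
  have ev: "(ys - z) \<bullet> v = - (e \<bullet> v)" unfolding e_def by (simp add: inner_diff_left)
  have "(ys - z) \<bullet> v + uy - uzr + \<beta> / 2 * (norm (ys - a))\<^sup>2 + \<eta> / 2 * (norm (ys - b))\<^sup>2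
       + (\<beta> + \<eta>) / 2 * (norm (z - ys))\<^sup>2 \<le> \<beta> / 2 * (norm (z - a))\<^sup>2 + \<eta> / 2 * (norm (z - b))\<^sup>2"
  proof -
    have "\<beta> * ((ys - a) \<bullet> e) = \<beta> / 2 * ((norm (z - a))\<^sup>2 - (norm (ys - a))\<^sup>2 - (norm (z - ys))\<^sup>2)"
      by (subst i1[symmetric]) simp
    moreover have "\<eta> * ((ys - b) \<bullet> e) = \<eta> / 2 * ((norm (z - b))\<^sup>2 - (norm (ys - b))\<^sup>2 - (norm (z - ys))\<^sup>2)"
      by (subst i2[symmetric]) simp
    ultimately have "\<beta> * ((ys - a) \<bullet> e) + \<eta> * ((ys - b) \<bullet> e) = \<beta> / 2 * (norm (z - a))\<^sup>2 + \<eta> / 2 * (norm (z - b))\<^sup>2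
       - \<beta> / 2 * (norm (ys - a))\<^sup>2 - \<eta> / 2 * (norm (ys - b))\<^sup>2 - (\<beta> + \<eta>) / 2 * (norm (z - ys))\<^sup>2"
      by (simp add: field_simps)
    then show ?thesis using K unfolding K_def ev by linarith
  qed
  then show ?thesis using uy by blast
qed

lemma breg_same: "breg \<omega> g q q = 0" by (simp add: breg_def)

lemma breg_3pt: "breg \<omega> g q p0 - breg \<omega> g q ps - breg \<omega> g ps p0 = (g ps - g p0) \<bullet> (q - ps)"
  by (simp add: breg_def inner_diff_left inner_diff_right algebra_simps)

lemma lin_sum_comb:
  fixes ps q :: "real^'m::finite"
  shows "(\<Sum>i\<in>UNIV. ((1 - l) *\<^sub>R ps + l *\<^sub>R q) $ i * h i) = (1 - l) * (\<Sum>i\<in>UNIV. ps $ i * h i) + l * (\<Sum>i\<in>UNIV. q $ i * h i)"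
proof -
  have "(\<Sum>i\<in>UNIV. ((1 - l) *\<^sub>R ps + l *\<^sub>R q) $ i * h i) = (\<Sum>i\<in>UNIV. (1 - l) * (ps $ i * h i) + l * (q $ i * h i))"
    by (rule sum.cong) (simp_all add: algebra_simps)
  then show ?thesis by (simp add: sum.distrib sum_distrib_left)
qed

lemma dual_3pt:
  fixes P :: "(real^'m::finite) set" and \<rho> :: "real^'m \<Rightarrow> ereal" and h :: "'m \<Rightarrow> real"
  assumes P: "convex P" and \<rho>c: "econvex_on P \<rho>" and \<rho>n: "\<forall>q\<in>P. \<rho> q \<noteq> -\<infinity>"
    and \<omega>d: "\<And>q. q \<in> P \<Longrightarrow> (\<omega> has_derivative (\<lambda>h. g\<omega> q \<bullet> h)) (at q within P)"
    and ps: "ps \<in> P" and q: "q \<in> P" and \<rho>q: "\<rho> q = ereal rq" and \<gamma>: "\<gamma> \<ge> 0"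
    and opt: "\<forall>q\<in>P. ereal (\<Sum>i\<in>UNIV. q $ i * h i) - \<rho> q - ereal (\<gamma> * breg \<omega> g\<omega> q p0)
                \<le> ereal (\<Sum>i\<in>UNIV. ps $ i * h i) - \<rho> ps - ereal (\<gamma> * breg \<omega> g\<omega> ps p0)"
  shows "\<exists>rp. \<rho> ps = ereal rp \<and> (\<Sum>i\<in>UNIV. q $ i * h i) - rq - ((\<Sum>i\<in>UNIV. ps $ i * h i) - rp)
            \<le> \<gamma> * (breg \<omega> g\<omega> q p0 - breg \<omega> g\<omega> q ps - breg \<omega> g\<omega> ps p0)"
proof -
  define Hq where "Hq = (\<Sum>i\<in>UNIV. q $ i * h i)"
  define Hp where "Hp = (\<Sum>i\<in>UNIV. ps $ i * h i)"
  have "\<rho> ps \<noteq> \<infinity>"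
  proof
    assume "\<rho> ps = \<infinity>"
    then show False using opt q \<rho>q by auto
  qed
  then obtain rp where rp: "\<rho> ps = ereal rp" using \<rho>n ps by (cases "\<rho> ps") auto
  have main: "Hq - rq - (Hp - rp) \<le> \<gamma> * ((g\<omega> ps - g\<omega> p0) \<bullet> (q - ps))"
  proof (cases "q = ps")
    case True then show ?thesis using rp \<rho>q unfolding Hq_def Hp_def by simp
  next
    case False
    define \<phi> where "\<phi> = (\<lambda>l::real. \<omega> (ps + l *\<^sub>R (q - ps)))"
    define K where "K = Hq - Hp - rq + rp + \<gamma> * (g\<omega> p0 \<bullet> (q - ps))"
    have seg: "ps + l *\<^sub>R (q - ps) \<in> P" if "0 \<le> l" "l \<le> 1" for l
    proof -
      have "ps + l *\<^sub>R (q - ps) = (1 - l) *\<^sub>R ps + l *\<^sub>R q" by (simp add: algebra_simps)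
      then show ?thesis using P ps q that by (simp add: convex_alt)
    qed
    have fd: "((\<lambda>l. ps + l *\<^sub>R (q - ps)) has_derivative (\<lambda>l. l *\<^sub>R (q - ps))) (at 0 within {0..1})"
      by (auto intro!: derivative_eq_intros)
    have wd: "(\<omega> has_derivative (\<lambda>h. g\<omega> ps \<bullet> h)) (at (ps + 0 *\<^sub>R (q - ps)) within ((\<lambda>l. ps + l *\<^sub>R (q - ps)) ` {0..1}))"
    proof -
      have sub: "(\<lambda>l. ps + l *\<^sub>R (q - ps)) ` {0..1} \<subseteq> P" using seg by auto
      show ?thesis using has_derivative_subset[OF \<omega>d[OF ps] sub] by simp
    qed
    have "(\<phi> has_derivative (\<lambda>l. g\<omega> ps \<bullet> (l *\<^sub>R (q - ps)))) (at 0 within {0..1})"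
      unfolding \<phi>_def by (rule has_derivative_in_compose[OF fd wd])
    moreover have "(\<lambda>l. g\<omega> ps \<bullet> (l *\<^sub>R (q - ps))) = (*) (g\<omega> ps \<bullet> (q - ps))"
      by (auto simp: mult.commute)
    ultimately have "(\<phi> has_field_derivative (g\<omega> ps \<bullet> (q - ps))) (at 0 within {0..1})"
      by (simp add: has_field_derivative_def)
    then have lim: "((\<lambda>y. (\<phi> y - \<phi> 0) / (y - 0)) \<longlongrightarrow> g\<omega> ps \<bullet> (q - ps)) (at_right 0)"
      unfolding has_field_derivative_iff at_within_Icc_at_right[OF zero_less_one] .
    have lim2: "((\<lambda>y. \<gamma> * ((\<phi> y - \<phi> 0) / (y - 0))) \<longlongrightarrow> \<gamma> * (g\<omega> ps \<bullet> (q - ps))) (at_right 0)"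
      by (rule tendsto_mult_left[OF lim])
    have ineq: "K \<le> \<gamma> * ((\<phi> l - \<phi> 0) / (l - 0))" if l: "0 < l" "l < 1" for l
    proof -
      define ql where "ql = (1 - l) *\<^sub>R ps + l *\<^sub>R q"
      have qle: "ql = ps + l *\<^sub>R (q - ps)" unfolding ql_def by (simp add: algebra_simps)
      have qlP: "ql \<in> P" unfolding qle using seg l by simp
      have \<rho>l: "\<rho> ql \<le> ereal ((1 - l) * rp + l * rq)"
        unfolding ql_def by (rule econvex_real[OF \<rho>c ps q rp \<rho>q l])
      then have "\<rho> ql \<noteq> \<infinity>" by auto
      then obtain rl where rl: "\<rho> ql = ereal rl" using \<rho>n qlP by (cases "\<rho> ql") auto
      have rl_le: "rl \<le> (1 - l) * rp + l * rq" using \<rho>l rl by simp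
      have "ereal (\<Sum>i\<in>UNIV. ql $ i * h i) - \<rho> ql - ereal (\<gamma> * breg \<omega> g\<omega> ql p0)
                \<le> ereal Hp - \<rho> ps - ereal (\<gamma> * breg \<omega> g\<omega> ps p0)"
        using opt qlP unfolding Hp_def by blast
      then have r: "(1 - l) * Hp + l * Hq - rl - \<gamma> * breg \<omega> g\<omega> ql p0 \<le> Hp - rp - \<gamma> * breg \<omega> g\<omega> ps p0"
        using rl rp unfolding ql_def lin_sum_comb Hp_def Hq_def by simp
      have b: "breg \<omega> g\<omega> ql p0 - breg \<omega> g\<omega> ps p0 = (\<phi> l - \<phi> 0) - l * (g\<omega> p0 \<bullet> (q - ps))"
        unfolding breg_def \<phi>_def qle by (simp add: inner_diff_right algebra_simps)
      have "l * K \<le> \<gamma> * (\<phi> l - \<phi> 0)"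
      proof -
        have "l * K = l * (Hq - Hp - rq + rp) + \<gamma> * (l * (g\<omega> p0 \<bullet> (q - ps)))"
          unfolding K_def by (simp add: algebra_simps)
        also have "\<dots> \<le> \<gamma> * (breg \<omega> g\<omega> ql p0 - breg \<omega> g\<omega> ps p0) + \<gamma> * (l * (g\<omega> p0 \<bullet> (q - ps)))"
        proof -
          have "l * (Hq - Hp - rq + rp) \<le> \<gamma> * breg \<omega> g\<omega> ql p0 - \<gamma> * breg \<omega> g\<omega> ps p0"
            using r rl_le by (simp add: algebra_simps)
          then show ?thesis by (simp add: right_diff_distrib)
        qed
        also have "\<dots> = \<gamma> * (\<phi> l - \<phi> 0)" unfolding b by (simp add: algebra_simps)
        finally show ?thesis .
      qed
      then show ?thesis using l by (simp add: field_simps mult.commute)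
    qed
    have "K \<le> \<gamma> * (g\<omega> ps \<bullet> (q - ps))"
    proof (rule tendsto_lowerbound[OF lim2])
      show "\<forall>\<^sub>F l in at_right 0. K \<le> \<gamma> * ((\<phi> l - \<phi> 0) / (l - 0))"
        unfolding eventually_at_right[OF zero_less_one] using ineq by (intro exI[of _ 1]) auto
    qed simp
    then show ?thesis unfolding K_def by (simp add: inner_diff_left algebra_simps)
  qed
  show ?thesis using rp main breg_3pt[of \<omega> g\<omega> q p0 ps] unfolding Hq_def Hp_def by auto
qed

locale drao =

  fixes X :: "(real^'n::finite) set"
    and P :: "(real^'m::finite) set"
    and \<rho> :: "real^'m \<Rightarrow> ereal"
    and u :: "real^'n \<Rightarrow> ereal"
    and f :: "'m \<Rightarrow> real^'n \<Rightarrow> real"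
    and fg :: "'m \<Rightarrow> real^'n \<Rightarrow> real^'n"
    and NU :: "real^'m \<Rightarrow> real"
    and \<omega> :: "real^'m \<Rightarrow> real"
    and g\<omega> :: "real^'m \<Rightarrow> real^'m"
    and xstar :: "real^'n"
    and pinit :: "real^'m"
    and R0 \<Delta> Lf DP :: real
    and v :: "nat \<Rightarrow> 'm \<Rightarrow> real^'n"
    and c :: "nat \<Rightarrow> 'm \<Rightarrow> real"
    and M Mb \<beta> \<gamma> \<eta> \<theta> \<tau> :: "nat \<Rightarrow> real"
    and S :: "nat \<Rightarrow> nat"
    and \<delta> :: "nat \<Rightarrow> nat \<Rightarrow> real"
    and x xl xbar :: "nat \<Rightarrow> real^'n"
    and y :: "nat \<Rightarrow> nat \<Rightarrow> real^'n"
    and vt :: "nat \<Rightarrow> nat \<Rightarrow> real^'n"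
    and p :: "nat \<Rightarrow> nat \<Rightarrow> real^'m"
    and pm1 :: "nat \<Rightarrow> real^'m"
  assumes X_closed: "closed X" and X_convex: "convex X"
    and P_closed: "closed P" and P_convex: "convex P" and P_simplex: "P \<subseteq> prob_simplex"
    and \<rho>_proper: "eproper_on P \<rho>" and \<rho>_closed: "eclosed_on P \<rho>" and \<rho>_convex: "econvex_on P \<rho>"
    and u_proper: "eproper_on UNIV u" and u_closed: "eclosed_on UNIV u" and u_convex: "econvex_on UNIV u"
    and f_convex: "\<And>i. convex_on UNIV (f i)"
    and f_grad: "\<And>i z. (f i has_derivative (\<lambda>h. fg i z \<bullet> h)) (at z)"
    and f_lip: "\<And>i. \<exists>L. L-lipschitz_on UNIV (fg i)"
    and Lf_def: "Lf = Sup ((\<lambda>q. lip_const (\<lambda>z. \<Sum>i\<in>UNIV. (q $ i) *\<^sub>R fg i z)) ` P)"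
    and xstar_in: "xstar \<in> X"
    and xstar_opt: "\<And>z. z \<in> X \<Longrightarrow> fobj P f \<rho> u xstar \<le> fobj P f \<rho> u z"
    and fstar_fin: "fobj P f \<rho> u xstar < \<infinity>"
    and NU_norm: "is_norm NU"
    and \<omega>_diff: "\<And>q. q \<in> P \<Longrightarrow> (\<omega> has_derivative (\<lambda>h. g\<omega> q \<bullet> h)) (at q within P)"
    and \<omega>_strong: "\<And>q q'. q \<in> P \<Longrightarrow> q' \<in> P \<Longrightarrow>
                     \<omega> q \<ge> \<omega> q' + g\<omega> q' \<bullet> (q - q') + (NU (q - q'))\<^sup>2 / 2"
    and DP_bdd: "bdd_above {sqrt (2 * breg \<omega> g\<omega> q q') | q q'. q \<in> P \<and> q' \<in> P}"
    and DP_def: "DP = Sup {sqrt (2 * breg \<omega> g\<omega> q q') | q q'. q \<in> P \<and> q' \<in> P}"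
    and DP_pos: "DP > 0"
    and x0_in: "x 0 \<in> X" and pinit_in: "pinit \<in> P"
    and R0_pos: "R0 > 0" and R0_ge: "R0 \<ge> norm (x 0 - xstar)"
    and \<Delta>_pos: "\<Delta> > 0"
    and \<theta>_def: "\<And>t. \<theta> t = (real t - 1) / real t"
    and \<tau>_def: "\<And>t. \<tau> t = (real t - 1) / 2"
    and \<eta>_def: "\<And>t. \<eta> t = 2 * Lf / real t"
    and M_def: "\<And>t. M t = Mconst NU (v t)"
    and M_pos: "\<And>t. t \<ge> 1 \<Longrightarrow> M t > 0"
    and S_def: "\<And>t. S t = nat \<lceil>real t * \<Delta> * M t\<rceil>"
    and Mb_def: "\<And>t. Mb t = real (S t) / (real t * \<Delta>)"
    and \<beta>_def: "\<And>t. \<beta> t = DP * Mb t / R0"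
    and \<gamma>_def: "\<And>t. \<gamma> t = R0 * Mb t / DP"
    and \<delta>_def: "\<And>t s. \<delta> t s = (if s = 1 then (if t = 1 then 1 else Mb t / Mb (t - 1)) else 1)"
    and xl0: "xl 0 = x 0"
    and xl_def: "\<And>t. t \<ge> 1 \<Longrightarrow>
        xl t = (1 / (1 + \<tau> t)) *\<^sub>R ((x (t - 1) + \<theta> t *\<^sub>R (x (t - 1) - x (t - 2))) + \<tau> t *\<^sub>R xl (t - 1))"
    and v_def: "\<And>t i. v t i = fg i (xl (if t = 0 then 1 else t))"
    and c_def: "\<And>t i. c t i = xl t \<bullet> v t i - f i (xl t)"
    and y10: "y 1 0 = x 0" and p10: "p 1 0 = pinit" and pm11: "pm1 1 = pinit"
    and yt0: "\<And>t. t \<ge> 2 \<Longrightarrow> y t 0 = y (t - 1) (S (t - 1))"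
    and pt0: "\<And>t. t \<ge> 2 \<Longrightarrow> p t 0 = p (t - 1) (S (t - 1))"
    and pm1t: "\<And>t. t \<ge> 2 \<Longrightarrow> pm1 t = p (t - 1) (S (t - 1) - 1)"
    and vt_def: "\<And>t s. t \<ge> 1 \<Longrightarrow> 1 \<le> s \<Longrightarrow> s \<le> S t \<Longrightarrow>
        vt t s = (\<Sum>i\<in>UNIV. (p t (s - 1) $ i) *\<^sub>R v t i)
               + \<delta> t s *\<^sub>R (\<Sum>i\<in>UNIV. (p t (s - 1) $ i - (if s = 1 then pm1 t else p t (s - 2)) $ i)
                                         *\<^sub>R v (if s = 1 then t - 1 else t) i)"
    and y_step: "\<And>t s. t \<ge> 1 \<Longrightarrow> 1 \<le> s \<Longrightarrow> s \<le> S t \<Longrightarrow>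
        y t s \<in> X \<and> (\<forall>z\<in>X.
          ereal (y t s \<bullet> vt t s) + u (y t s)
            + ereal (\<beta> t / 2 * (norm (y t s - y t (s - 1)))\<^sup>2 + \<eta> t / 2 * (norm (y t s - x (t - 1)))\<^sup>2)
          \<le> ereal (z \<bullet> vt t s) + u z
            + ereal (\<beta> t / 2 * (norm (z - y t (s - 1)))\<^sup>2 + \<eta> t / 2 * (norm (z - x (t - 1)))\<^sup>2))"
    and p_step: "\<And>t s. t \<ge> 1 \<Longrightarrow> 1 \<le> s \<Longrightarrow> s \<le> S t \<Longrightarrow>
        p t s \<in> P \<and> (\<forall>q\<in>P.
          ereal (\<Sum>i\<in>UNIV. q $ i * (v t i \<bullet> y t s - c t i)) - \<rho> q
            - ereal (\<gamma> t * breg \<omega> g\<omega> q (p t (s - 1)))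
          \<le> ereal (\<Sum>i\<in>UNIV. p t s $ i * (v t i \<bullet> y t s - c t i)) - \<rho> (p t s)
            - ereal (\<gamma> t * breg \<omega> g\<omega> (p t s) (p t (s - 1))))"
    and x_def: "\<And>t. t \<ge> 1 \<Longrightarrow> x t = (1 / real (S t)) *\<^sub>R (\<Sum>s=1..S t. y t s)"
    and xbar_def: "\<And>N. xbar N = (1 / (\<Sum>t=1..N. real t)) *\<^sub>R (\<Sum>t=1..N. real t *\<^sub>R x t)"
begin

lemma P_nonneg: "q \<in> P \<Longrightarrow> 0 \<le> q $ i"
  using P_simplex unfolding prob_simplex_def by auto

lemma P_sum: "q \<in> P \<Longrightarrow> (\<Sum>i\<in>UNIV. q $ i) = 1"
  using P_simplex unfolding prob_simplex_def by auto

lemma P_le1: "q \<in> P \<Longrightarrow> q $ i \<le> 1"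
  using member_le_sum[of i UNIV "\<lambda>i. q $ i"] P_nonneg P_sum by auto

lemma u_nm: "u z \<noteq> -\<infinity>"
  using u_proper unfolding eproper_on_def by auto

lemma \<rho>_nm: "q \<in> P \<Longrightarrow> \<rho> q \<noteq> -\<infinity>"
  using \<rho>_proper unfolding eproper_on_def by auto

lemma \<rho>_fin_ex: "\<exists>q0\<in>P. \<exists>r. \<rho> q0 = ereal r"
proof -
  obtain q0 where "q0 \<in> P" "\<rho> q0 \<noteq> \<infinity>" using \<rho>_proper unfolding eproper_on_def by auto
  then show ?thesis using \<rho>_nm by (cases "\<rho> q0") auto
qed

lemma fobj_lower:
  assumes "q \<in> P" "\<rho> q = ereal r"
  shows "ereal (\<Sum>i\<in>UNIV. q $ i * f i z) - ereal r \<le> (SUP q\<in>P. ereal (\<Sum>i\<in>UNIV. q $ i * f i z) - \<rho> q)"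
  using SUP_upper[OF assms(1), of "\<lambda>q. ereal (\<Sum>i\<in>UNIV. q $ i * f i z) - \<rho> q"] assms(2) by simp

lemma SUP_nm: "(SUP q\<in>P. ereal (\<Sum>i\<in>UNIV. q $ i * f i z) - \<rho> q) \<noteq> -\<infinity>"
proof -
  obtain q0 r where q0: "q0 \<in> P" "\<rho> q0 = ereal r" using \<rho>_fin_ex by blast
  show ?thesis using fobj_lower[OF q0, of z] by auto
qed

lemma fstar_real: obtains fs uz where "fobj P f \<rho> u xstar = ereal fs" "u xstar = ereal uz"
proof -
  let ?s = "(SUP q\<in>P. ereal (\<Sum>i\<in>UNIV. q $ i * f i xstar) - \<rho> q)"
  have e: "fobj P f \<rho> u xstar = ?s + u xstar" unfolding fobj_def by simp
  have "?s \<noteq> \<infinity>" using fstar_fin u_nm[of xstar] e by auto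
  then obtain s where s: "?s = ereal s" using SUP_nm[of xstar] by (cases ?s) auto
  have "u xstar \<noteq> \<infinity>" using fstar_fin e s by auto
  then obtain uz where uz: "u xstar = ereal uz" using u_nm[of xstar] by (cases "u xstar") auto
  show ?thesis using that[of "s + uz" uz] e s uz by simp
qed

lemma fobj_ge_L:
  assumes "q \<in> P" "\<rho> q = ereal r" "u z = ereal uzr"
  shows "ereal ((\<Sum>i\<in>UNIV. q $ i * f i z) - r + uzr) \<le> fobj P f \<rho> u z"
proof -
  have "ereal ((\<Sum>i\<in>UNIV. q $ i * f i z) - r + uzr) = (ereal (\<Sum>i\<in>UNIV. q $ i * f i z) - ereal r) + u z"
    using assms(3) by simp
  also have "\<dots> \<le> fobj P f \<rho> u z" unfolding fobj_def
    by (rule add_right_mono[OF fobj_lower[OF assms(1,2)]])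
  finally show ?thesis .
qed

lemma Fq_convex:
  assumes "q \<in> P"
  shows "convex_on UNIV (\<lambda>z. \<Sum>i\<in>UNIV. q $ i * f i z)"
proof (rule convex_onI)
  fix t :: real and a b :: "real^'n" assume t: "0 < t" "t < 1"
  have "(\<Sum>i\<in>UNIV. q $ i * f i ((1 - t) *\<^sub>R a + t *\<^sub>R b)) \<le> (\<Sum>i\<in>UNIV. q $ i * ((1 - t) * f i a + t * f i b))"
  proof (rule sum_mono)
    fix i
    show "q $ i * f i ((1 - t) *\<^sub>R a + t *\<^sub>R b) \<le> q $ i * ((1 - t) * f i a + t * f i b)"
      using convex_onD[OF f_convex[of i], of t a b] t P_nonneg[OF assms] by (intro mult_left_mono) auto
  qed
  also have "\<dots> = (\<Sum>i\<in>UNIV. (1 - t) * (q $ i * f i a) + t * (q $ i * f i b))"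
    by (rule sum.cong) (simp_all add: algebra_simps)
  also have "\<dots> = (1 - t) * (\<Sum>i\<in>UNIV. q $ i * f i a) + t * (\<Sum>i\<in>UNIV. q $ i * f i b)"
    by (simp add: sum.distrib sum_distrib_left)
  finally show "(\<Sum>i\<in>UNIV. q $ i * f i ((1 - t) *\<^sub>R a + t *\<^sub>R b)) \<le> (1 - t) * (\<Sum>i\<in>UNIV. q $ i * f i a) + t * (\<Sum>i\<in>UNIV. q $ i * f i b)" .
qed simp

lemma Fq_deriv:
  "((\<lambda>z. \<Sum>i\<in>UNIV. q $ i * f i z) has_derivative (\<lambda>h. (\<Sum>i\<in>UNIV. q $ i *\<^sub>R fg i z) \<bullet> h)) (at z)"
proof -
  have "((\<lambda>z. \<Sum>i\<in>UNIV. q $ i * f i z) has_derivative (\<lambda>h. \<Sum>i\<in>UNIV. q $ i * (fg i z \<bullet> h))) (at z)"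
    by (intro has_derivative_sum has_derivative_mult_right f_grad)
  moreover have "(\<lambda>h. \<Sum>i\<in>UNIV. q $ i * (fg i z \<bullet> h)) = (\<lambda>h. (\<Sum>i\<in>UNIV. q $ i *\<^sub>R fg i z) \<bullet> h)"
    by (simp add: inner_sum_left)
  ultimately show ?thesis by simp
qed

lemma f_grad_ineq: "f i w \<ge> f i z + fg i z \<bullet> (w - z)"
  by (rule grad_ineq[OF f_convex f_grad])


lemma Lc_ex: obtains Lc where "\<And>i. (Lc i)-lipschitz_on UNIV (fg i)"
proof -
  have "\<exists>Lc. \<forall>i. (Lc i)-lipschitz_on UNIV (fg i)" using f_lip by (intro choice) auto
  then show ?thesis using that by blast
qed

lemma Gq_lip:
  assumes "q \<in> P" "\<And>i. (Lc i)-lipschitz_on UNIV (fg i)"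
  shows "(\<Sum>i\<in>UNIV. q $ i * Lc i)-lipschitz_on UNIV (\<lambda>z. \<Sum>i\<in>UNIV. q $ i *\<^sub>R fg i z)"
proof (rule lipschitz_onI)
  show "0 \<le> (\<Sum>i\<in>UNIV. q $ i * Lc i)"
    using P_nonneg[OF assms(1)] lipschitz_on_nonneg[OF assms(2)] by (intro sum_nonneg mult_nonneg_nonneg) auto
  fix a b :: "real^'n"
  have "dist (\<Sum>i\<in>UNIV. q $ i *\<^sub>R fg i a) (\<Sum>i\<in>UNIV. q $ i *\<^sub>R fg i b) = norm (\<Sum>i\<in>UNIV. q $ i *\<^sub>R (fg i a - fg i b))"
    by (simp add: dist_norm sum_subtractf scaleR_diff_right)
  also have "\<dots> \<le> (\<Sum>i\<in>UNIV. norm (q $ i *\<^sub>R (fg i a - fg i b)))" by (rule norm_sum)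
  also have "\<dots> \<le> (\<Sum>i\<in>UNIV. q $ i * Lc i * dist a b)"
  proof (rule sum_mono)
    fix i
    have "norm (q $ i *\<^sub>R (fg i a - fg i b)) = q $ i * dist (fg i a) (fg i b)"
      using P_nonneg[OF assms(1)] by (simp add: dist_norm)
    also have "\<dots> \<le> q $ i * (Lc i * dist a b)"
      using lipschitz_onD[OF assms(2)[of i], of a b] P_nonneg[OF assms(1)] by (intro mult_left_mono) auto
    finally show "norm (q $ i *\<^sub>R (fg i a - fg i b)) \<le> q $ i * Lc i * dist a b" by (simp add: mult.assoc)
  qed
  also have "\<dots> = (\<Sum>i\<in>UNIV. q $ i * Lc i) * dist a b" by (simp add: sum_distrib_right)
  finally show "dist (\<Sum>i\<in>UNIV. q $ i *\<^sub>R fg i a) (\<Sum>i\<in>UNIV. q $ i *\<^sub>R fg i b) \<le> (\<Sum>i\<in>UNIV. q $ i * Lc i) * dist a b" .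
qed

lemma lip_const_props:
  fixes g :: "real^'n \<Rightarrow> real^'n"
  assumes "L-lipschitz_on UNIV g"
  shows "(lip_const g)-lipschitz_on UNIV g" "lip_const g \<le> L"
proof -
  let ?S = "{L. L-lipschitz_on UNIV g}"
  have ne: "?S \<noteq> {}" using assms by blast
  have bb: "bdd_below ?S" by (rule bdd_belowI[of _ 0]) (auto dest: lipschitz_on_nonneg)
  show "lip_const g \<le> L" unfolding lip_const_def by (rule cInf_lower[OF _ bb]) (use assms in simp)
  show "(lip_const g)-lipschitz_on UNIV g"
  proof (rule lipschitz_onI)
    show "0 \<le> lip_const g" unfolding lip_const_def
      by (rule cInf_greatest[OF ne]) (auto dest: lipschitz_on_nonneg)
    fix a b :: "real^'n"
    show "dist (g a) (g b) \<le> lip_const g * dist a b"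
    proof (cases "a = b")
      case True then show ?thesis by simp
    next
      case False
      then have d: "dist a b > 0" by simp
      have "dist (g a) (g b) / dist a b \<le> lip_const g" unfolding lip_const_def
      proof (rule cInf_greatest[OF ne])
        fix L' assume "L' \<in> ?S"
        then have "dist (g a) (g b) \<le> L' * dist a b" using lipschitz_onD by fastforce
        then show "dist (g a) (g b) / dist a b \<le> L'" using d by (simp add: divide_le_eq)
      qed
      then show ?thesis using d by (simp add: divide_le_eq)
    qed
  qed
qed

lemma Lf_props: "0 \<le> Lf" "\<And>q. q \<in> P \<Longrightarrow> Lf-lipschitz_on UNIV (\<lambda>z. \<Sum>i\<in>UNIV. q $ i *\<^sub>R fg i z)"
proof -
  obtain Lc where Lc: "\<And>i. (Lc i)-lipschitz_on UNIV (fg i)" using Lc_ex by blast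
  have lc: "lip_const (\<lambda>z. \<Sum>i\<in>UNIV. q $ i *\<^sub>R fg i z) \<le> (\<Sum>i\<in>UNIV. Lc i)" if q: "q \<in> P" for q
  proof -
    have "lip_const (\<lambda>z. \<Sum>i\<in>UNIV. q $ i *\<^sub>R fg i z) \<le> (\<Sum>i\<in>UNIV. q $ i * Lc i)"
      by (rule lip_const_props(2)[OF Gq_lip[OF q Lc]])
    also have "\<dots> \<le> (\<Sum>i\<in>UNIV. Lc i)"
      using P_le1[OF q] P_nonneg[OF q] lipschitz_on_nonneg[OF Lc] by (intro sum_mono mult_left_le_one_le) auto
    finally show ?thesis .
  qed
  have bd: "bdd_above ((\<lambda>q. lip_const (\<lambda>z. \<Sum>i\<in>UNIV. q $ i *\<^sub>R fg i z)) ` P)"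
    by (rule bdd_aboveI[of _ "\<Sum>i\<in>UNIV. Lc i"]) (use lc in auto)
  have le: "lip_const (\<lambda>z. \<Sum>i\<in>UNIV. q $ i *\<^sub>R fg i z) \<le> Lf" if q: "q \<in> P" for q
    unfolding Lf_def by (rule cSup_upper[OF _ bd]) (use q in simp)
  have lipq: "(lip_const (\<lambda>z. \<Sum>i\<in>UNIV. q $ i *\<^sub>R fg i z))-lipschitz_on UNIV (\<lambda>z. \<Sum>i\<in>UNIV. q $ i *\<^sub>R fg i z)"
    if q: "q \<in> P" for q
    by (rule lip_const_props(1)[OF Gq_lip[OF q Lc]])
  show "0 \<le> Lf" using le[OF pinit_in] lipschitz_on_nonneg[OF lipq[OF pinit_in]] by linarith
  show "Lf-lipschitz_on UNIV (\<lambda>z. \<Sum>i\<in>UNIV. q $ i *\<^sub>R fg i z)" if "q \<in> P" for q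
    by (rule lipschitz_on_mono[OF lipq[OF that] _ le[OF that]]) simp
qed

definition lam :: "nat \<Rightarrow> real" where "lam t = 1 / (\<Delta> * Mb t)"

lemma step_basic:
  assumes t: "t \<ge> 1"
  shows "S t \<ge> 1" "real (S t) \<ge> real t * \<Delta> * M t" "Mb t > 0" "M t \<le> Mb t" "M t > 0"
    "\<beta> t > 0" "\<gamma> t > 0" "\<eta> t \<ge> 0" "\<beta> t * \<gamma> t = (Mb t)\<^sup>2"
    "lam t * \<beta> t = DP / (\<Delta> * R0)" "lam t * \<gamma> t = R0 / (\<Delta> * DP)" "lam t * real (S t) = real t"
    "lam t * Mb t = 1 / \<Delta>" "real t * \<eta> t = 2 * Lf" "lam t > 0"
proof -
  have tp: "real t > 0" using t by simp
  have Mp: "M t > 0" using M_pos t by simp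
  then show "M t > 0" .
  have pos: "real t * \<Delta> * M t > 0" using tp Mp \<Delta>_pos by simp
  have Sge: "real (S t) \<ge> real t * \<Delta> * M t" unfolding S_def[of t] by linarith
  then show "real (S t) \<ge> real t * \<Delta> * M t" .
  then show S1: "S t \<ge> 1" using pos by simp
  have td: "real t * \<Delta> > 0" using tp \<Delta>_pos by simp
  show Mbp: "Mb t > 0" unfolding Mb_def using S1 td by simp
  show "M t \<le> Mb t" unfolding Mb_def using Sge td by (simp add: le_divide_eq mult.commute)
  show "\<beta> t > 0" unfolding \<beta>_def using Mbp DP_pos R0_pos by simp
  show "\<gamma> t > 0" unfolding \<gamma>_def using Mbp DP_pos R0_pos by simp
  show "\<eta> t \<ge> 0" unfolding \<eta>_def using Lf_props(1) by simp
  show "\<beta> t * \<gamma> t = (Mb t)\<^sup>2" unfolding \<beta>_def \<gamma>_def using DP_pos R0_pos by (simp add: power2_eq_square field_simps)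
  show "lam t * \<beta> t = DP / (\<Delta> * R0)" unfolding lam_def \<beta>_def using Mbp \<Delta>_pos R0_pos by (simp add: field_simps)
  show "lam t * \<gamma> t = R0 / (\<Delta> * DP)" unfolding lam_def \<gamma>_def using Mbp \<Delta>_pos DP_pos by (simp add: field_simps)
  show "lam t * real (S t) = real t" unfolding lam_def Mb_def using S1 td \<Delta>_pos tp by (simp add: field_simps)
  show "lam t * Mb t = 1 / \<Delta>" unfolding lam_def using Mbp \<Delta>_pos by (simp add: field_simps)
  show "real t * \<eta> t = 2 * Lf" unfolding \<eta>_def using tp by simp
  show "lam t > 0" unfolding lam_def using Mbp \<Delta>_pos by simp
qed

lemma lam_delta: "t \<ge> 2 \<Longrightarrow> lam t * \<delta> t 1 = lam (t - 1)"
  using step_basic(3)[of t] step_basic(3)[of "t - 1"] \<Delta>_pos unfolding lam_def \<delta>_def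
  by (simp add: field_simps)

lemma M0: "M 0 = M 1"
proof -
  have "v 0 = v 1" by (rule ext) (simp add: v_def)
  then show ?thesis by (simp add: M_def)
qed

lemma delta_M_le:
  assumes "t \<ge> 1" "s \<ge> 1"
  shows "\<delta> t s * M (if s = 1 then t - 1 else t) \<le> Mb t" "\<delta> t s \<ge> 0"
proof -
  show "\<delta> t s * M (if s = 1 then t - 1 else t) \<le> Mb t"
  proof (cases "s = 1")
    case s: True
    show ?thesis
    proof (cases "t = 1")
      case True then show ?thesis using s step_basic(4)[of 1] M0 \<delta>_def by simp
    next
      case False
      then have t2: "t \<ge> 2" "t - 1 \<ge> 1" using assms by auto
      have "\<delta> t s * M (t - 1) = Mb t * (M (t - 1) / Mb (t - 1))" using s False unfolding \<delta>_def by simp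
      also have "\<dots> \<le> Mb t * 1"
        using step_basic(3,4)[OF t2(2)] step_basic(3)[OF assms(1)]
        by (intro mult_left_mono) (auto simp: divide_le_eq)
      finally show ?thesis using s by simp
    qed
  next
    case False then show ?thesis using step_basic(4)[OF assms(1)] \<delta>_def by simp
  qed
  show "\<delta> t s \<ge> 0" using step_basic(3) assms unfolding \<delta>_def
    by (auto intro!: divide_nonneg_nonneg less_imp_le)
qed

end

lemma amgm:
  fixes k1 k2 cc X Y :: real
  assumes "k1 > 0" "cc\<^sup>2 \<le> k1 * k2"
  shows "cc * X * Y \<le> k1 / 2 * Y\<^sup>2 + k2 / 2 * X\<^sup>2"
proof -
  have "0 \<le> (k1 * Y - cc * X)\<^sup>2" by simp
  also have "\<dots> = k1\<^sup>2 * Y\<^sup>2 - 2 * k1 * (cc * X * Y) + cc\<^sup>2 * X\<^sup>2" by (simp add: power2_eq_square algebra_simps)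
  also have "\<dots> \<le> k1\<^sup>2 * Y\<^sup>2 - 2 * k1 * (cc * X * Y) + k1 * k2 * X\<^sup>2"
    using assms(2) by (intro add_left_mono mult_right_mono) auto
  finally have "0 \<le> k1 * (k1 * Y\<^sup>2 - 2 * (cc * X * Y) + k2 * X\<^sup>2)" by (simp add: power2_eq_square algebra_simps)
  then have "0 \<le> k1 * Y\<^sup>2 - 2 * (cc * X * Y) + k2 * X\<^sup>2" using assms(1) by (simp add: zero_le_mult_iff)
  then show ?thesis by simp
qed

context drao begin

lemma mem_yp:
  assumes "t \<ge> 1" "s \<le> S t"
  shows "y t s \<in> X" "p t s \<in> P"
proof -
  have "y t s \<in> X \<and> p t s \<in> P"
  proof (cases "s = 0")
    case False then show ?thesis using y_step[of t s] p_step[of t s] assms by auto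
  next
    case s0: True
    show ?thesis
    proof (cases "t = 1")
      case True then show ?thesis using s0 y10 p10 x0_in pinit_in by simp
    next
      case False
      then have t2: "t \<ge> 2" "t - 1 \<ge> 1" using assms by auto
      have S1: "1 \<le> S (t - 1)" using step_basic(1)[OF t2(2)] .
      show ?thesis using s0 yt0[OF t2(1)] pt0[OF t2(1)] y_step[OF t2(2) S1] p_step[OF t2(2) S1] by simp
    qed
  qed
  then show "y t s \<in> X" "p t s \<in> P" by auto
qed

lemma pm1_mem: "t \<ge> 1 \<Longrightarrow> pm1 t \<in> P"
proof (cases "t = 1")
  case True then show ?thesis using pm11 pinit_in by simp
next
  case False
  assume t: "t \<ge> 1"
  then have t2: "t \<ge> 2" "t - 1 \<ge> 1" using False by auto
  show ?thesis using pm1t[OF t2(1)] mem_yp(2)[OF t2(2), of "S (t - 1) - 1"] by simp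
qed

definition prevp :: "nat \<Rightarrow> nat \<Rightarrow> real^'m" where
  "prevp t s = (if s = 0 then pm1 t else p t (s - 1))"

lemma prevp_mem: "t \<ge> 1 \<Longrightarrow> s \<le> S t \<Longrightarrow> prevp t s \<in> P"
  unfolding prevp_def using pm1_mem mem_yp(2)[of t "s - 1"] by auto

definition uzr where "uzr = real_of_ereal (u xstar)"
definition fs where "fs = real_of_ereal (fobj P f \<rho> u xstar)"

lemma uzr: "u xstar = ereal uzr" and fs: "fobj P f \<rho> u xstar = ereal fs"
  using fstar_real unfolding uzr_def fs_def by (metis real_of_ereal.simps(1))+

lemma U_strong: "q \<in> P \<Longrightarrow> q' \<in> P \<Longrightarrow> (NU (q - q'))\<^sup>2 \<le> 2 * breg \<omega> g\<omega> q q'"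
  using \<omega>_strong[of q q'] unfolding breg_def by simp

lemma U_nonneg: "q \<in> P \<Longrightarrow> q' \<in> P \<Longrightarrow> 0 \<le> breg \<omega> g\<omega> q q'"
  using U_strong[of q q'] by (smt (verit) zero_le_power2)

lemma U_le_DP: "q \<in> P \<Longrightarrow> q' \<in> P \<Longrightarrow> 2 * breg \<omega> g\<omega> q q' \<le> DP\<^sup>2"
proof -
  assume q: "q \<in> P" "q' \<in> P"
  have "sqrt (2 * breg \<omega> g\<omega> q q') \<le> DP" unfolding DP_def
    by (rule cSup_upper[OF _ DP_bdd]) (use q in blast)
  moreover have "0 \<le> 2 * breg \<omega> g\<omega> q q'" using U_nonneg[OF q] by simp
  ultimately show ?thesis by (metis real_sqrt_le_iff real_sqrt_unique sqrt_le_D)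
qed

lemma NU_le_DP: "q \<in> P \<Longrightarrow> q' \<in> P \<Longrightarrow> NU (q - q') \<le> DP"
proof -
  assume q: "q \<in> P" "q' \<in> P"
  have "(NU (q - q'))\<^sup>2 \<le> DP\<^sup>2" using U_strong[OF q] U_le_DP[OF q] by linarith
  then show ?thesis using DP_pos by (simp add: power2_le_iff_abs_le)
qed

end

context drao begin

definition uy where "uy t s = real_of_ereal (u (y t s))"
definition rp where "rp t s = real_of_ereal (\<rho> (p t s))"

lemma primal_at:
  assumes t: "t \<ge> 1" "1 \<le> s" "s \<le> S t"
  shows "u (y t s) = ereal (uy t s)"
    "(y t s - xstar) \<bullet> vt t s + uy t s - uzr + \<beta> t / 2 * (norm (y t s - y t (s - 1)))\<^sup>2
       + \<eta> t / 2 * (norm (y t s - x (t - 1)))\<^sup>2 + (\<beta> t + \<eta> t) / 2 * (norm (xstar - y t s))\<^sup>2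
     \<le> \<beta> t / 2 * (norm (xstar - y t (s - 1)))\<^sup>2 + \<eta> t / 2 * (norm (xstar - x (t - 1)))\<^sup>2"
proof -
  obtain uyr where uyr: "u (y t s) = ereal uyr" and ineq:
    "(y t s - xstar) \<bullet> vt t s + uyr - uzr + \<beta> t / 2 * (norm (y t s - y t (s - 1)))\<^sup>2
       + \<eta> t / 2 * (norm (y t s - x (t - 1)))\<^sup>2 + (\<beta> t + \<eta> t) / 2 * (norm (xstar - y t s))\<^sup>2
     \<le> \<beta> t / 2 * (norm (xstar - y t (s - 1)))\<^sup>2 + \<eta> t / 2 * (norm (xstar - x (t - 1)))\<^sup>2"
    using primal_3pt[OF X_convex u_convex u_nm _ xstar_in uzr _ _ conjunct2[OF y_step[OF t]]]
      conjunct1[OF y_step[OF t]] step_basic(6,8)[OF t(1)] by fastforce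
  have "uy t s = uyr" unfolding uy_def uyr by simp
  then show "u (y t s) = ereal (uy t s)" using uyr by simp
  show "(y t s - xstar) \<bullet> vt t s + uy t s - uzr + \<beta> t / 2 * (norm (y t s - y t (s - 1)))\<^sup>2
       + \<eta> t / 2 * (norm (y t s - x (t - 1)))\<^sup>2 + (\<beta> t + \<eta> t) / 2 * (norm (xstar - y t s))\<^sup>2
     \<le> \<beta> t / 2 * (norm (xstar - y t (s - 1)))\<^sup>2 + \<eta> t / 2 * (norm (xstar - x (t - 1)))\<^sup>2"
    using ineq \<open>uy t s = uyr\<close> by simp
qed

lemma dual_at:
  assumes t: "t \<ge> 1" "1 \<le> s" "s \<le> S t" and q: "q \<in> P" "\<rho> q = ereal rq"
  shows "\<rho> (p t s) = ereal (rp t s)"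
    "(\<Sum>i\<in>UNIV. q $ i * (v t i \<bullet> y t s - c t i)) - rq - ((\<Sum>i\<in>UNIV. p t s $ i * (v t i \<bullet> y t s - c t i)) - rp t s)
       \<le> \<gamma> t * (breg \<omega> g\<omega> q (p t (s - 1)) - breg \<omega> g\<omega> q (p t s) - breg \<omega> g\<omega> (p t s) (p t (s - 1)))"
proof -
  obtain r where r: "\<rho> (p t s) = ereal r" and ineq:
    "(\<Sum>i\<in>UNIV. q $ i * (v t i \<bullet> y t s - c t i)) - rq - ((\<Sum>i\<in>UNIV. p t s $ i * (v t i \<bullet> y t s - c t i)) - r)
       \<le> \<gamma> t * (breg \<omega> g\<omega> q (p t (s - 1)) - breg \<omega> g\<omega> q (p t s) - breg \<omega> g\<omega> (p t s) (p t (s - 1)))"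
    using dual_3pt[OF P_convex \<rho>_convex _ \<omega>_diff conjunct1[OF p_step[OF t]] q _ conjunct2[OF p_step[OF t]]]
      \<rho>_nm step_basic(7)[OF t(1)] by fastforce
  have "rp t s = r" unfolding rp_def r by simp
  then show "\<rho> (p t s) = ereal (rp t s)" using r by simp
  show "(\<Sum>i\<in>UNIV. q $ i * (v t i \<bullet> y t s - c t i)) - rq - ((\<Sum>i\<in>UNIV. p t s $ i * (v t i \<bullet> y t s - c t i)) - rp t s)
       \<le> \<gamma> t * (breg \<omega> g\<omega> q (p t (s - 1)) - breg \<omega> g\<omega> q (p t s) - breg \<omega> g\<omega> (p t s) (p t (s - 1)))"
    using ineq \<open>rp t s = r\<close> by simp
qed

lemma rp_fin: assumes "t \<ge> 1" "1 \<le> s" "s \<le> S t" shows "\<rho> (p t s) = ereal (rp t s)"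
proof -
  obtain q0 r where "q0 \<in> P" "\<rho> q0 = ereal r" using \<rho>_fin_ex by blast
  then show ?thesis using dual_at(1)[OF assms] by blast
qed

definition Acoef where
  "Acoef t s = (if s = 0 then \<delta> t 1 * (\<Sum>i\<in>UNIV. (p t 0 - pm1 t) $ i * (v (t - 1) i \<bullet> (y t 0 - xstar)))
     else (\<Sum>i\<in>UNIV. (p t s - p t (s - 1)) $ i * (v t i \<bullet> (y t s - xstar))))"

definition kap where "kap = DP / (\<Delta> * R0)"
definition kap' where "kap' = R0 / (\<Delta> * DP)"

definition Phi where
  "Phi q t s = kap / 2 * (norm (xstar - y t s))\<^sup>2 + kap' * (breg \<omega> g\<omega> q (p t s) + breg \<omega> g\<omega> (p t s) (prevp t s))
     - lam t * Acoef t s"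

definition Gv where
  "Gv q rq t s = (\<Sum>i\<in>UNIV. q $ i * (v t i \<bullet> y t s - c t i)) - rq + uy t s
     - ((\<Sum>i\<in>UNIV. p t s $ i * (v t i \<bullet> xstar - c t i)) - rp t s + uzr)
     + \<eta> t / 2 * ((norm (xstar - y t s))\<^sup>2 + (norm (y t s - x (t - 1)))\<^sup>2 - (norm (xstar - x (t - 1)))\<^sup>2)"

lemma sum_split_diff:
  fixes a b :: "real^'m" and V :: "'m \<Rightarrow> real^'n"
  shows "(\<Sum>i\<in>UNIV. a $ i * (V i \<bullet> w)) = (\<Sum>i\<in>UNIV. b $ i * (V i \<bullet> w)) + (\<Sum>i\<in>UNIV. (a - b) $ i * (V i \<bullet> w))"
  by (simp add: sum.distrib[symmetric] algebra_simps)

lemma sum_split_vec: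
  fixes a :: "real^'m" and V :: "'m \<Rightarrow> real^'n"
  shows "(\<Sum>i\<in>UNIV. a $ i * (V i \<bullet> (w1 + w2))) = (\<Sum>i\<in>UNIV. a $ i * (V i \<bullet> w1)) + (\<Sum>i\<in>UNIV. a $ i * (V i \<bullet> w2))"
  by (simp add: sum.distrib[symmetric] algebra_simps inner_add_right)

lemma vt_inner:
  assumes "t \<ge> 1" "1 \<le> s" "s \<le> S t"
  shows "vt t s \<bullet> w = (\<Sum>i\<in>UNIV. p t (s - 1) $ i * (v t i \<bullet> w))
     + \<delta> t s * (\<Sum>i\<in>UNIV. (p t (s - 1) - prevp t (s - 1)) $ i * (v (if s = 1 then t - 1 else t) i \<bullet> w))"
proof -
  have pp: "prevp t (s - 1) = (if s = 1 then pm1 t else p t (s - 2))"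
    unfolding prevp_def using assms by (auto simp: numeral_2_eq_2)
  show ?thesis unfolding vt_def[OF assms] pp
    by (simp add: inner_add_left inner_sum_left)
qed

lemma Acoef_prev:
  assumes "t \<ge> 1" "1 \<le> s" "s \<le> S t"
  shows "\<delta> t s * (\<Sum>i\<in>UNIV. (p t (s - 1) - prevp t (s - 1)) $ i * (v (if s = 1 then t - 1 else t) i \<bullet> (y t (s - 1) - xstar)))
       = Acoef t (s - 1)"
proof (cases "s = 1")
  case True then show ?thesis unfolding Acoef_def prevp_def by simp
next
  case False
  then show ?thesis unfolding Acoef_def prevp_def \<delta>_def using assms by simp
qed

lemma per_step:
  assumes t: "t \<ge> 1" "1 \<le> s" "s \<le> S t" and q: "q \<in> P" "\<rho> q = ereal rq"
  shows "lam t * Gv q rq t s \<le> Phi q t (s - 1) - Phi q t s"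
proof -
  define ys where "ys = y t s"
  define a where "a = y t (s - 1)"
  define b where "b = x (t - 1)"
  define ps where "ps = p t s"
  define p0 where "p0 = p t (s - 1)"
  define pp where "pp = prevp t (s - 1)"
  define V' where "V' = v (if s = 1 then t - 1 else t)"
  define dp where "dp = p0 - pp"
  have ps_in: "ps \<in> P" unfolding ps_def using mem_yp t by simp
  have p0_in: "p0 \<in> P" unfolding p0_def using mem_yp t by simp
  have pp_in: "pp \<in> P" unfolding pp_def using prevp_mem t by simp
  note P1 = primal_at(2)[OF t, folded ys_def a_def b_def]
  note D1 = dual_at(2)[OF t q, folded ps_def p0_def ys_def]
  have L1: "(\<Sum>i\<in>UNIV. ps $ i * (v t i \<bullet> ys - c t i)) - (\<Sum>i\<in>UNIV. ps $ i * (v t i \<bullet> xstar - c t i))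
      = (\<Sum>i\<in>UNIV. ps $ i * (v t i \<bullet> (ys - xstar)))"
    by (simp add: sum_subtractf[symmetric] inner_diff_right algebra_simps)
  have L2: "vt t s \<bullet> (ys - xstar) = (\<Sum>i\<in>UNIV. p0 $ i * (v t i \<bullet> (ys - xstar))) + \<delta> t s * (\<Sum>i\<in>UNIV. dp $ i * (V' i \<bullet> (ys - xstar)))"
    unfolding p0_def dp_def V'_def pp_def p0_def by (rule vt_inner[OF t])
  have L3: "(\<Sum>i\<in>UNIV. ps $ i * (v t i \<bullet> (ys - xstar))) = (\<Sum>i\<in>UNIV. p0 $ i * (v t i \<bullet> (ys - xstar))) + Acoef t s"
    unfolding Acoef_def ps_def p0_def ys_def
    using t sum_split_diff[where a="p t s" and b="p t (s - 1)" and V="v t" and w="y t s - xstar"] by simp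
  have L4: "(\<Sum>i\<in>UNIV. dp $ i * (V' i \<bullet> (ys - xstar))) = (\<Sum>i\<in>UNIV. dp $ i * (V' i \<bullet> (a - xstar))) + (\<Sum>i\<in>UNIV. dp $ i * (V' i \<bullet> (ys - a)))"
  proof -
    have "ys - xstar = (a - xstar) + (ys - a)" by simp
    then show ?thesis by (metis sum_split_vec)
  qed
  have L5: "\<delta> t s * (\<Sum>i\<in>UNIV. dp $ i * (V' i \<bullet> (a - xstar))) = Acoef t (s - 1)"
    unfolding dp_def p0_def pp_def V'_def a_def by (rule Acoef_prev[OF t])
  define X where "X = - (\<delta> t s * (\<Sum>i\<in>UNIV. dp $ i * (V' i \<bullet> (ys - a))))"
  have ident: "(\<Sum>i\<in>UNIV. ps $ i * (v t i \<bullet> ys - c t i)) - (\<Sum>i\<in>UNIV. ps $ i * (v t i \<bullet> xstar - c t i))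
      = (ys - xstar) \<bullet> vt t s + Acoef t s - Acoef t (s - 1) + X"
    using L1 L2 L3 L4 L5 unfolding X_def by (simp add: inner_commute algebra_simps)
  have NUsym: "NU (- dp) = NU dp" using is_norm_basic(2)[OF NU_norm] .
  have "X = \<delta> t s * (\<Sum>i\<in>UNIV. (- dp) $ i * (V' i \<bullet> (ys - a)))"
    unfolding X_def by (simp add: sum_negf)
  also have "\<dots> \<le> \<delta> t s * (M (if s = 1 then t - 1 else t) * NU (- dp) * norm (ys - a))"
    using Mconst_bilinear[OF NU_norm, of "- dp" "V'" "ys - a"] delta_M_le(2)[OF t(1,2)]
    unfolding V'_def M_def by (intro mult_left_mono) auto
  also have "\<dots> = (\<delta> t s * M (if s = 1 then t - 1 else t)) * NU dp * norm (ys - a)"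
    using NUsym by simp
  also have "\<dots> \<le> Mb t * NU dp * norm (ys - a)"
    using delta_M_le(1)[OF t(1,2)] is_norm_basic(3)[OF NU_norm, of dp]
    by (intro mult_right_mono) auto
  also have "\<dots> \<le> \<beta> t / 2 * (norm (ys - a))\<^sup>2 + \<gamma> t / 2 * (NU dp)\<^sup>2"
    by (rule amgm) (use step_basic(6,9)[OF t(1)] in auto)
  also have "\<dots> \<le> \<beta> t / 2 * (norm (ys - a))\<^sup>2 + \<gamma> t * breg \<omega> g\<omega> p0 pp"
    using U_strong[OF p0_in pp_in] step_basic(7)[OF t(1)] unfolding dp_def by simp
  finally have Xb: "X \<le> \<beta> t / 2 * (norm (ys - a))\<^sup>2 + \<gamma> t * breg \<omega> g\<omega> p0 pp" .
  have G_eq: "Gv q rq t s = ((\<Sum>i\<in>UNIV. q $ i * (v t i \<bullet> ys - c t i)) - rq - ((\<Sum>i\<in>UNIV. ps $ i * (v t i \<bullet> ys - c t i)) - rp t s))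
      + ((\<Sum>i\<in>UNIV. ps $ i * (v t i \<bullet> ys - c t i)) - (\<Sum>i\<in>UNIV. ps $ i * (v t i \<bullet> xstar - c t i)))
      + uy t s - uzr + \<eta> t / 2 * ((norm (xstar - ys))\<^sup>2 + (norm (ys - b))\<^sup>2 - (norm (xstar - b))\<^sup>2)"
    unfolding Gv_def ys_def ps_def b_def by simp
  have Gb: "Gv q rq t s \<le> \<gamma> t * (breg \<omega> g\<omega> q p0 + breg \<omega> g\<omega> p0 pp) - \<gamma> t * (breg \<omega> g\<omega> q ps + breg \<omega> g\<omega> ps p0)
      + \<beta> t / 2 * (norm (xstar - a))\<^sup>2 - \<beta> t / 2 * (norm (xstar - ys))\<^sup>2 + Acoef t s - Acoef t (s - 1)"
  proof -
    have e1: "\<gamma> t * (breg \<omega> g\<omega> q p0 - breg \<omega> g\<omega> q ps - breg \<omega> g\<omega> ps p0)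
       = \<gamma> t * breg \<omega> g\<omega> q p0 - \<gamma> t * breg \<omega> g\<omega> q ps - \<gamma> t * breg \<omega> g\<omega> ps p0" by (simp add: algebra_simps)
    have e2: "\<gamma> t * (breg \<omega> g\<omega> q p0 + breg \<omega> g\<omega> p0 pp) - \<gamma> t * (breg \<omega> g\<omega> q ps + breg \<omega> g\<omega> ps p0)
       = \<gamma> t * breg \<omega> g\<omega> q p0 + \<gamma> t * breg \<omega> g\<omega> p0 pp - \<gamma> t * breg \<omega> g\<omega> q ps - \<gamma> t * breg \<omega> g\<omega> ps p0"
      by (simp add: algebra_simps)
    have e3: "\<eta> t / 2 * ((norm (xstar - ys))\<^sup>2 + (norm (ys - b))\<^sup>2 - (norm (xstar - b))\<^sup>2)
       = \<eta> t / 2 * (norm (xstar - ys))\<^sup>2 + \<eta> t / 2 * (norm (ys - b))\<^sup>2 - \<eta> t / 2 * (norm (xstar - b))\<^sup>2"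
      by (simp add: algebra_simps)
    have e4: "(\<beta> t + \<eta> t) / 2 * (norm (xstar - ys))\<^sup>2 = \<beta> t / 2 * (norm (xstar - ys))\<^sup>2 + \<eta> t / 2 * (norm (xstar - ys))\<^sup>2"
      by (simp add: algebra_simps add_divide_distrib)
    show ?thesis unfolding e2 using G_eq[unfolded ident e3] Xb P1[unfolded e4] D1[unfolded e1] by linarith
  qed
  have lb: "lam t * \<beta> t = kap" "lam t * \<gamma> t = kap'" "lam t > 0"
    using step_basic(10,11,15)[OF t(1)] unfolding kap_def kap'_def by auto
  have "lam t * Gv q rq t s \<le> lam t * (\<gamma> t * (breg \<omega> g\<omega> q p0 + breg \<omega> g\<omega> p0 pp) - \<gamma> t * (breg \<omega> g\<omega> q ps + breg \<omega> g\<omega> ps p0)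
      + \<beta> t / 2 * (norm (xstar - a))\<^sup>2 - \<beta> t / 2 * (norm (xstar - ys))\<^sup>2 + Acoef t s - Acoef t (s - 1))"
    using Gb lb(3) by (intro mult_left_mono) auto
  also have "\<dots> = kap' * (breg \<omega> g\<omega> q p0 + breg \<omega> g\<omega> p0 pp) - kap' * (breg \<omega> g\<omega> q ps + breg \<omega> g\<omega> ps p0)
      + kap / 2 * (norm (xstar - a))\<^sup>2 - kap / 2 * (norm (xstar - ys))\<^sup>2 + lam t * Acoef t s - lam t * Acoef t (s - 1)"
    unfolding lb(1,2)[symmetric] by (simp add: algebra_simps)
  also have "\<dots> = Phi q t (s - 1) - Phi q t s"
  proof -
    have "prevp t s = p0" unfolding prevp_def p0_def using t by simp
    then show ?thesis unfolding Phi_def a_def ys_def p0_def pp_def ps_def using t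
      by (simp add: algebra_simps)
  qed
  finally show ?thesis .
qed

end

context drao begin

definition Iset :: "nat \<Rightarrow> nat \<Rightarrow> (nat \<times> nat) set" where
  "Iset t s = (SIGMA t':{1..<t}. {1..S t'}) \<union> ({t} \<times> {1..s})"

definition Tsum where "Tsum q rq t s = (\<Sum>(t', s')\<in>Iset t s. lam t' * Gv q rq t' s')"

lemma Iset_finite: "finite (Iset t s)"
  unfolding Iset_def by auto

lemma Iset_Suc: "Iset t (Suc s) = insert (t, Suc s) (Iset t s)" "(t, Suc s) \<notin> Iset t s"
  unfolding Iset_def by auto

lemma Iset_Suc0: "k \<ge> 1 \<Longrightarrow> Iset (Suc k) 0 = Iset k (S k)"
  unfolding Iset_def by (auto simp: less_Suc_eq)

lemma Iset_0: "t \<ge> 2 \<Longrightarrow> Iset t 0 = Iset (t - 1) (S (t - 1))"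
  using Iset_Suc0[of "t - 1"] by simp

lemma Iset_1_0: "Iset 1 0 = {}"
  unfolding Iset_def by auto

lemma Iset_full: assumes "N \<ge> 1" shows "Iset N (S N) = (SIGMA t:{1..N}. {1..S t})"
proof -
  have "{1..N} = insert N {1..<N}" using assms by auto
  then show ?thesis unfolding Iset_def by auto
qed

lemma Phi_cross:
  assumes "t \<ge> 2"
  shows "Phi q t 0 = Phi q (t - 1) (S (t - 1))"
proof -
  have t1: "t - 1 \<ge> 1" using assms by simp
  have S1: "S (t - 1) \<ge> 1" using step_basic(1)[OF t1] .
  have pv: "prevp t 0 = prevp (t - 1) (S (t - 1))" unfolding prevp_def using pm1t[OF assms] S1 by simp
  have "lam t * Acoef t 0 = (lam t * \<delta> t 1) * (\<Sum>i\<in>UNIV. (p t 0 - pm1 t) $ i * (v (t - 1) i \<bullet> (y t 0 - xstar)))"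
    unfolding Acoef_def by simp
  also have "\<dots> = lam (t - 1) * Acoef (t - 1) (S (t - 1))"
    unfolding lam_delta[OF assms] Acoef_def using S1 yt0[OF assms] pt0[OF assms] pm1t[OF assms] by simp
  finally have "lam t * Acoef t 0 = lam (t - 1) * Acoef (t - 1) (S (t - 1))" .
  then show ?thesis unfolding Phi_def using pv yt0[OF assms] pt0[OF assms] by simp
qed

lemma telescope:
  assumes q: "q \<in> P" "\<rho> q = ereal rq" and t: "t \<ge> 1" "s \<le> S t"
  shows "Tsum q rq t s \<le> Phi q 1 0 - Phi q t s"
  using t
proof (induction t arbitrary: s rule: nat_induct_at_least)
  case base
  then show ?case
  proof (induction s)
    case 0 then show ?case unfolding Tsum_def Iset_1_0 by simp
  next
    case (Suc s)
    have "Tsum q rq 1 (Suc s) = lam 1 * Gv q rq 1 (Suc s) + Tsum q rq 1 s"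
      unfolding Tsum_def Iset_Suc(1) using Iset_Suc(2) Iset_finite by simp
    also have "\<dots> \<le> (Phi q 1 s - Phi q 1 (Suc s)) + (Phi q 1 0 - Phi q 1 s)"
      using per_step[OF _ _ Suc.prems q] Suc.IH Suc.prems by (intro add_mono) auto
    finally show ?case by simp
  qed
next
  case (Suc t)
  have t2: "Suc t \<ge> 2" using Suc.hyps by simp
  show ?case using Suc.prems
  proof (induction s)
    case 0
    have "Tsum q rq (Suc t) 0 = Tsum q rq t (S t)" unfolding Tsum_def using Iset_0[OF t2] by simp
    also have "\<dots> \<le> Phi q 1 0 - Phi q t (S t)" using Suc.IH by simp
    also have "\<dots> = Phi q 1 0 - Phi q (Suc t) 0" using Phi_cross[OF t2] by simp
    finally show ?case .
  next
    case (Suc s)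
    have "Tsum q rq (Suc t) (Suc s) = lam (Suc t) * Gv q rq (Suc t) (Suc s) + Tsum q rq (Suc t) s"
      unfolding Tsum_def Iset_Suc(1) using Iset_Suc(2) Iset_finite by simp
    also have "\<dots> \<le> (Phi q (Suc t) s - Phi q (Suc t) (Suc s)) + (Phi q 1 0 - Phi q (Suc t) s)"
      using per_step[OF _ _ Suc.prems q] Suc.IH Suc.prems by (intro add_mono) auto
    finally show ?case by simp
  qed
qed

lemma Phi_10: "q \<in> P \<Longrightarrow> Phi q 1 0 \<le> DP * R0 / \<Delta>"
proof -
  assume q: "q \<in> P"
  have "Phi q 1 0 = kap / 2 * (norm (xstar - x 0))\<^sup>2 + kap' * breg \<omega> g\<omega> q pinit"
    unfolding Phi_def Acoef_def prevp_def using y10 p10 pm11 by (simp add: norm_minus_commute breg_same)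
  also have "\<dots> \<le> kap / 2 * R0\<^sup>2 + kap' * (DP\<^sup>2 / 2)"
  proof (intro add_mono mult_left_mono)
    show "(norm (xstar - x 0))\<^sup>2 \<le> R0\<^sup>2" using R0_ge by (simp add: norm_minus_commute power_mono)
    show "breg \<omega> g\<omega> q pinit \<le> DP\<^sup>2 / 2" using U_le_DP[OF q pinit_in] by simp
    show "0 \<le> kap / 2" unfolding kap_def using DP_pos \<Delta>_pos R0_pos by simp
    show "0 \<le> kap'" unfolding kap'_def using DP_pos \<Delta>_pos R0_pos by simp
  qed
  also have "\<dots> = DP * R0 / \<Delta>" unfolding kap_def kap'_def using DP_pos \<Delta>_pos R0_pos
    by (simp add: power2_eq_square field_simps)
  finally show ?thesis .
qed

lemma Phi_lower:
  assumes q: "q \<in> P" and t: "t \<ge> 1" "1 \<le> s" "s \<le> S t"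
  shows "Phi q t s \<ge> 0" "Phi q t s \<ge> kap / 2 * (norm (y t s - xstar))\<^sup>2 - DP / \<Delta> * norm (y t s - xstar)"
proof -
  define e where "e = norm (y t s - xstar)"
  define d where "d = p t s - p t (s - 1)"
  have pin: "p t s \<in> P" "p t (s - 1) \<in> P" using mem_yp t by auto
  have U0: "0 \<le> breg \<omega> g\<omega> q (p t s)" using U_nonneg[OF q pin(1)] .
  have U1: "(NU d)\<^sup>2 \<le> 2 * breg \<omega> g\<omega> (p t s) (p t (s - 1))" unfolding d_def using U_strong[OF pin] .
  have NUd: "0 \<le> NU d" "NU d \<le> DP" unfolding d_def using is_norm_basic(3)[OF NU_norm] NU_le_DP[OF pin] by auto
  have A: "Acoef t s \<le> M t * NU d * e"
    unfolding Acoef_def d_def e_def M_def using t Mconst_bilinear[OF NU_norm, of "p t s - p t (s - 1)" "v t" "y t s - xstar"] by simp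
  have lA: "lam t * Acoef t s \<le> lam t * Mb t * NU d * e"
  proof -
    have "lam t * Acoef t s \<le> lam t * (M t * NU d * e)"
      using A step_basic(15)[OF t(1)] by (intro mult_left_mono) auto
    also have "\<dots> \<le> lam t * (Mb t * NU d * e)"
      using step_basic(4,15)[OF t(1)] NUd unfolding e_def
      by (intro mult_left_mono mult_right_mono) auto
    finally show ?thesis by (simp add: mult.assoc)
  qed
  have lMb: "lam t * Mb t = 1 / \<Delta>" using step_basic(13)[OF t(1)] .
  have kk: "kap > 0" "kap' > 0" unfolding kap_def kap'_def using DP_pos \<Delta>_pos R0_pos by auto
  have Phi_eq: "Phi q t s = kap / 2 * e\<^sup>2 + kap' * (breg \<omega> g\<omega> q (p t s) + breg \<omega> g\<omega> (p t s) (p t (s - 1))) - lam t * Acoef t s"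
    unfolding Phi_def prevp_def e_def using t by (simp add: norm_minus_commute)
  have "lam t * Mb t * NU d * e \<le> kap / 2 * e\<^sup>2 + kap' / 2 * (NU d)\<^sup>2"
  proof (rule amgm)
    show "kap > 0" using kk by simp
    show "(lam t * Mb t)\<^sup>2 \<le> kap * kap'" unfolding lMb kap_def kap'_def using DP_pos \<Delta>_pos R0_pos
      by (simp add: power2_eq_square field_simps)
  qed
  also have "\<dots> \<le> kap / 2 * e\<^sup>2 + kap' * breg \<omega> g\<omega> (p t s) (p t (s - 1))"
    using U1 kk by simp
  finally have "lam t * Acoef t s \<le> kap / 2 * e\<^sup>2 + kap' * breg \<omega> g\<omega> (p t s) (p t (s - 1))" using lA by linarith
  then show "Phi q t s \<ge> 0" unfolding Phi_eq using U0 kk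
    by (simp add: algebra_simps) (smt (verit) mult_nonneg_nonneg)
  have "lam t * Mb t * NU d * e \<le> DP / \<Delta> * e"
    unfolding lMb e_def using NUd \<Delta>_pos by (simp add: divide_right_mono mult_right_mono)
  then have "lam t * Acoef t s \<le> DP / \<Delta> * e" using lA by linarith
  moreover have "0 \<le> kap' * (breg \<omega> g\<omega> q (p t s) + breg \<omega> g\<omega> (p t s) (p t (s - 1)))"
    using U0 U_nonneg[OF pin] kk by simp
  ultimately show "Phi q t s \<ge> kap / 2 * (norm (y t s - xstar))\<^sup>2 - DP / \<Delta> * norm (y t s - xstar)"
    unfolding Phi_eq e_def by linarith
qed

end

lemma convex_sqdist: "convex_on UNIV (\<lambda>x::'a::real_inner. (norm (w - x))\<^sup>2)"
proof (rule convex_onI)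
  fix t :: real and a b :: 'a assume t: "0 < t" "t < 1"
  define A where "A = w - a"
  define B where "B = w - b"
  have e: "w - ((1 - t) *\<^sub>R a + t *\<^sub>R b) = (1 - t) *\<^sub>R A + t *\<^sub>R B"
    unfolding A_def B_def by (simp add: algebra_simps)
  have "(1 - t) * (norm A)\<^sup>2 + t * (norm B)\<^sup>2 - (norm ((1 - t) *\<^sub>R A + t *\<^sub>R B))\<^sup>2 = t * (1 - t) * (norm (A - B))\<^sup>2"
    unfolding power2_norm_eq_inner
    by (simp add: inner_add_left inner_add_right inner_diff_left inner_diff_right inner_commute algebra_simps)
  moreover have "t * (1 - t) * (norm (A - B))\<^sup>2 \<ge> 0" using t by simp
  ultimately show "(norm (w - ((1 - t) *\<^sub>R a + t *\<^sub>R b)))\<^sup>2 \<le> (1 - t) * (norm (w - a))\<^sup>2 + t * (norm (w - b))\<^sup>2"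
    unfolding e A_def[symmetric] B_def[symmetric] by linarith
qed simp

lemma econvex_dom:
  fixes u :: "'a::real_vector \<Rightarrow> ereal"
  assumes uc: "econvex_on UNIV u" and un: "\<And>x. u x \<noteq> -\<infinity>"
  shows "convex {x. u x \<noteq> \<infinity>}" "convex_on {x. u x \<noteq> \<infinity>} (\<lambda>x. real_of_ereal (u x))"
proof -
  have key: "u ((1 - t) *\<^sub>R a + t *\<^sub>R b) \<le> ereal ((1 - t) * real_of_ereal (u a) + t * real_of_ereal (u b))"
    if "u a \<noteq> \<infinity>" "u b \<noteq> \<infinity>" "0 < t" "t < 1" for a b t
  proof -
    have "u a = ereal (real_of_ereal (u a))" "u b = ereal (real_of_ereal (u b))"
      using that un[of a] un[of b] by (cases "u a"; simp; cases "u b"; simp)+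
    then show ?thesis using econvex_real[OF uc _ _ _ _ that(3,4)] by blast
  qed
  show cv: "convex {x. u x \<noteq> \<infinity>}"
  proof (rule convexI)
    fix a b :: 'a and s t :: real
    assume ab: "a \<in> {x. u x \<noteq> \<infinity>}" "b \<in> {x. u x \<noteq> \<infinity>}" and st: "0 \<le> s" "0 \<le> t" "s + t = 1"
    show "s *\<^sub>R a + t *\<^sub>R b \<in> {x. u x \<noteq> \<infinity>}"
    proof (cases "t = 0 \<or> t = 1")
      case True then show ?thesis using ab st by auto
    next
      case False
      then have "0 < t" "t < 1" using st by auto
      then have "u ((1 - t) *\<^sub>R a + t *\<^sub>R b) \<noteq> \<infinity>" using key[of a b t] ab by auto
      moreover have "s = 1 - t" using st by simp
      ultimately show ?thesis by simp
    qed
  qed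
  show "convex_on {x. u x \<noteq> \<infinity>} (\<lambda>x. real_of_ereal (u x))"
  proof (rule convex_onI)
    fix t :: real and a b assume t: "0 < t" "t < 1" and ab: "a \<in> {x. u x \<noteq> \<infinity>}" "b \<in> {x. u x \<noteq> \<infinity>}"
    have k: "u ((1 - t) *\<^sub>R a + t *\<^sub>R b) \<le> ereal ((1 - t) * real_of_ereal (u a) + t * real_of_ereal (u b))"
      using key ab t by auto
    have "u ((1 - t) *\<^sub>R a + t *\<^sub>R b) = ereal (real_of_ereal (u ((1 - t) *\<^sub>R a + t *\<^sub>R b)))"
      using k un[of "(1 - t) *\<^sub>R a + t *\<^sub>R b"] by (cases "u ((1 - t) *\<^sub>R a + t *\<^sub>R b)") auto
    then show "real_of_ereal (u ((1 - t) *\<^sub>R a + t *\<^sub>R b)) \<le> (1 - t) * real_of_ereal (u a) + t * real_of_ereal (u b)"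
      using k by (metis ereal_less_eq(3))
  qed (rule cv)
qed

lemma u_jensen:
  fixes u :: "'a::real_vector \<Rightarrow> ereal" and I :: "'b set"
  assumes uc: "econvex_on UNIV u" and un: "\<And>x. u x \<noteq> -\<infinity>"
    and I: "finite I" "I \<noteq> {}" and a: "\<And>i. i \<in> I \<Longrightarrow> a i \<ge> 0" "(\<Sum>i\<in>I. a i) = 1"
    and r: "\<And>i. i \<in> I \<Longrightarrow> u (z i) = ereal (r i)"
  shows "u (\<Sum>i\<in>I. a i *\<^sub>R z i) = ereal (real_of_ereal (u (\<Sum>i\<in>I. a i *\<^sub>R z i)))"
    "real_of_ereal (u (\<Sum>i\<in>I. a i *\<^sub>R z i)) \<le> (\<Sum>i\<in>I. a i * r i)"
proof -
  note D = econvex_dom[OF uc un]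
  have zin: "z i \<in> {x. u x \<noteq> \<infinity>}" if "i \<in> I" for i using r[OF that] by simp
  have m: "(\<Sum>i\<in>I. a i *\<^sub>R z i) \<in> {x. u x \<noteq> \<infinity>}"
    by (rule convex_sum[OF I(1) D(1) a(2) a(1) zin])
  then show "u (\<Sum>i\<in>I. a i *\<^sub>R z i) = ereal (real_of_ereal (u (\<Sum>i\<in>I. a i *\<^sub>R z i)))"
    using un[of "\<Sum>i\<in>I. a i *\<^sub>R z i"] by (cases "u (\<Sum>i\<in>I. a i *\<^sub>R z i)") auto
  have "real_of_ereal (u (\<Sum>i\<in>I. a i *\<^sub>R z i)) \<le> (\<Sum>i\<in>I. a i * real_of_ereal (u (z i)))"
    by (rule convex_on_sum[OF I D(2) a(2) a(1) zin])
  also have "\<dots> = (\<Sum>i\<in>I. a i * r i)" using r by (intro sum.cong) auto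
  finally show "real_of_ereal (u (\<Sum>i\<in>I. a i *\<^sub>R z i)) \<le> (\<Sum>i\<in>I. a i * r i)" .
qed

lemma sqnorm_jensen:
  fixes I :: "'b set" and z :: "'b \<Rightarrow> 'a::real_inner"
  assumes I: "finite I" "I \<noteq> {}" and a: "\<And>i. i \<in> I \<Longrightarrow> a i \<ge> 0" "(\<Sum>i\<in>I. a i) = 1"
  shows "(norm (w - (\<Sum>i\<in>I. a i *\<^sub>R z i)))\<^sup>2 \<le> (\<Sum>i\<in>I. a i * (norm (w - z i))\<^sup>2)"
  by (rule convex_on_sum[OF I convex_sqdist a(2) a(1)]) auto

lemma sum_telescope_real: fixes g :: "nat \<Rightarrow> real" and N :: nat shows "(\<Sum>t=1..N. (g t - g (t - 1))) = g N - g 0"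
  by (induction N) auto

context drao begin

lemma x_avg: "t \<ge> 1 \<Longrightarrow> x t = (\<Sum>s=1..S t. (1 / real (S t)) *\<^sub>R y t s)"
  using x_def by (simp add: scaleR_sum_right)

lemma S_card: "t \<ge> 1 \<Longrightarrow> (\<Sum>s=1..S t. 1 / real (S t)) = 1"
  using step_basic(1)[of t] by simp

lemma x_mem: "x t \<in> X"
proof (cases "t = 0")
  case True then show ?thesis using x0_in by simp
next
  case False
  then have t: "t \<ge> 1" by simp
  show ?thesis unfolding x_avg[OF t]
    by (rule convex_sum[OF _ X_convex S_card[OF t]]) (use mem_yp[OF t] in auto)
qed

lemma W_pos: "N \<ge> 1 \<Longrightarrow> (\<Sum>t=1..N. real t) > 0"
  by (rule sum_pos2[of _ N]) auto

lemma xbar_avg: "xbar N = (\<Sum>t=1..N. (real t / (\<Sum>t=1..N. real t)) *\<^sub>R x t)"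
  unfolding xbar_def by (simp add: scaleR_sum_right)

lemma xbar_w: "N \<ge> 1 \<Longrightarrow> (\<Sum>t=1..N. real t / (\<Sum>t=1..N. real t)) = 1"
  using W_pos[of N] by (simp add: sum_divide_distrib[symmetric])

lemma xbar_mem: assumes "N \<ge> 1" shows "xbar N \<in> X"
  unfolding xbar_avg
proof (rule convex_sum[OF _ X_convex xbar_w[OF assms]])
  fix i assume "i \<in> {1..N}"
  show "0 \<le> real i / (\<Sum>t=1..N. real t)" using W_pos[OF assms] by simp
qed (auto intro: x_mem)

end

lemma agd_identity:
  fixes a xx xt l l' ga g :: "'a::real_inner"
  assumes "(1 + \<tau>) *\<^sub>R l = xt + \<tau> *\<^sub>R l'"
  shows "Fa + ga \<bullet> (xx - a) - (Fl + g \<bullet> (xx - l))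
    = \<tau> * (Fl' - Fa - ga \<bullet> (l' - a)) - (1 + \<tau>) * (Fl - Fa - ga \<bullet> (l - a))
      - \<tau> * (Fl' - Fl - g \<bullet> (l' - l)) + (xx - xt) \<bullet> (ga - g)"
proof -
  have xt: "xt = (1 + \<tau>) *\<^sub>R l - \<tau> *\<^sub>R l'" using assms by (simp add: algebra_simps)
  show ?thesis unfolding xt
    by (simp add: inner_diff_left inner_diff_right inner_add_left inner_add_right inner_commute algebra_simps)
qed

lemma amgm2:
  fixes k X Y L D :: real
  assumes "Y\<^sup>2 \<le> 2 * L * D" "L \<ge> 0" "k \<ge> 0" "D \<ge> 0" "X \<ge> 0" "Y \<ge> 0"
  shows "k * X * Y \<le> L * X\<^sup>2 + k\<^sup>2 * D / 2"
proof (cases "L = 0 \<or> k = 0")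
  case True
  then show ?thesis
  proof
    assume "L = 0" then have "Y = 0" using assms(1) by simp
    then show ?thesis using assms by simp
  next
    assume "k = 0" then show ?thesis using assms by simp
  qed
next
  case False
  then have L: "L > 0" and k: "k > 0" using assms by auto
  have "k * X * Y \<le> (k\<^sup>2 / (2 * L)) / 2 * Y\<^sup>2 + (2 * L) / 2 * X\<^sup>2"
    by (rule amgm) (use L k in \<open>auto simp: power2_eq_square\<close>)
  also have "(k\<^sup>2 / (2 * L)) / 2 * Y\<^sup>2 \<le> (k\<^sup>2 / (2 * L)) / 2 * (2 * L * D)"
    using assms(1) L by (intro mult_left_mono) auto
  also have "(k\<^sup>2 / (2 * L)) / 2 * (2 * L * D) = k\<^sup>2 * D / 2" using L by (simp add: field_simps)
  finally show ?thesis by simp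
qed

context drao begin

definition Fq where "Fq q z = (\<Sum>i\<in>UNIV. q $ i * f i z)"
definition Gq where "Gq q z = (\<Sum>i\<in>UNIV. q $ i *\<^sub>R fg i z)"
definition ell where "ell q t w = (\<Sum>i\<in>UNIV. q $ i * (v t i \<bullet> w - c t i))"

lemma ell_eq: "t \<ge> 1 \<Longrightarrow> ell q t w = Fq q (xl t) + Gq q (xl t) \<bullet> (w - xl t)"
proof -
  assume t: "t \<ge> 1"
  have "ell q t w = (\<Sum>i\<in>UNIV. q $ i * f i (xl t) + q $ i * (fg i (xl t) \<bullet> (w - xl t)))"
    unfolding ell_def c_def v_def using t by (intro sum.cong) (auto simp: inner_diff_right inner_commute algebra_simps)
  also have "\<dots> = Fq q (xl t) + Gq q (xl t) \<bullet> (w - xl t)"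
    unfolding Fq_def Gq_def by (simp add: sum.distrib inner_sum_left)
  finally show ?thesis .
qed

lemma Fq_props: "q \<in> P \<Longrightarrow> convex_on UNIV (Fq q)" "\<And>z. (Fq q has_derivative (\<lambda>h. Gq q z \<bullet> h)) (at z)"
  "q \<in> P \<Longrightarrow> Lf-lipschitz_on UNIV (Gq q)"
  unfolding Fq_def Gq_def using Fq_convex Fq_deriv Lf_props(2) by auto

lemma xl_rec: "t \<ge> 1 \<Longrightarrow> (1 + \<tau> t) *\<^sub>R xl t = (x (t - 1) + \<theta> t *\<^sub>R (x (t - 1) - x (t - 2))) + \<tau> t *\<^sub>R xl (t - 1)"
proof -
  assume t: "t \<ge> 1"
  have "\<tau> t \<ge> 0" unfolding \<tau>_def using t by simp
  then have "1 + \<tau> t > 0" by linarith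
  then show ?thesis unfolding xl_def[OF t] by simp
qed

end

context drao begin

lemma outer_ind:
  assumes q: "q \<in> P" and n: "n \<ge> 1"
  shows "(\<Sum>t=1..n. real t * (Fq q a + Gq q a \<bullet> (x t - a) - ell q t (x t)))
    \<le> - ((real n * (real n + 1) / 2) * (Fq q (xl n) - Fq q a - Gq q a \<bullet> (xl n - a)))
      + real n * ((x n - x (n - 1)) \<bullet> (Gq q a - Gq q (xl n)))
      + Lf * (\<Sum>t=1..n-1. (norm (x t - x (t - 1)))\<^sup>2)"
  using n
proof (induction n rule: nat_induct_at_least)
  case base
  have t0: "\<tau> 1 = 0" "\<theta> 1 = 0" by (simp_all add: \<tau>_def \<theta>_def)
  have "Fq q a + Gq q a \<bullet> (x 1 - a) - ell q 1 (x 1)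
     = Fq q a + Gq q a \<bullet> (x 1 - a) - (Fq q (xl 1) + Gq q (xl 1) \<bullet> (x 1 - xl 1))"
    using ell_eq[of 1] by simp
  also have "\<dots> = \<tau> 1 * (Fq q (xl 0) - Fq q a - Gq q a \<bullet> (xl 0 - a)) - (1 + \<tau> 1) * (Fq q (xl 1) - Fq q a - Gq q a \<bullet> (xl 1 - a))
      - \<tau> 1 * (Fq q (xl 0) - Fq q (xl 1) - Gq q (xl 1) \<bullet> (xl 0 - xl 1)) + (x 1 - (x 0 + \<theta> 1 *\<^sub>R (x 0 - x 0))) \<bullet> (Gq q a - Gq q (xl 1))"
    by (rule agd_identity) (use xl_rec[of 1] in simp)
  finally show ?case using t0 by simp
next
  case (Suc n)
  define ga where "ga = Gq q a"
  define g where "g = Gq q (xl n)"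
  define g' where "g' = Gq q (xl (Suc n))"
  define Dn where "Dn = Fq q (xl n) - Fq q a - ga \<bullet> (xl n - a)"
  define Dn' where "Dn' = Fq q (xl (Suc n)) - Fq q a - ga \<bullet> (xl (Suc n) - a)"
  define B where "B = Fq q (xl n) - Fq q (xl (Suc n)) - g' \<bullet> (xl n - xl (Suc n))"
  define dn where "dn = x n - x (n - 1)"
  define dn' where "dn' = x (Suc n) - x n"
  define E' where "E' = Fq q a + ga \<bullet> (x (Suc n) - a) - ell q (Suc n) (x (Suc n))"
  have tau: "\<tau> (Suc n) = real n / 2" "\<theta> (Suc n) = real n / (real n + 1)" by (simp_all add: \<tau>_def \<theta>_def)
  have xt: "Suc n - 1 = n" "Suc n - 2 = n - 1" by auto
  have id0: "E' = \<tau> (Suc n) * Dn - (1 + \<tau> (Suc n)) * Dn' - \<tau> (Suc n) * B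
       + (x (Suc n) - (x n + \<theta> (Suc n) *\<^sub>R (x n - x (n - 1)))) \<bullet> (ga - g')"
  proof -
    have "E' = Fq q a + ga \<bullet> (x (Suc n) - a) - (Fq q (xl (Suc n)) + g' \<bullet> (x (Suc n) - xl (Suc n)))"
      unfolding E'_def g'_def using ell_eq[of "Suc n"] by simp
    also have "\<dots> = \<tau> (Suc n) * Dn - (1 + \<tau> (Suc n)) * Dn' - \<tau> (Suc n) * B
       + (x (Suc n) - (x n + \<theta> (Suc n) *\<^sub>R (x n - x (n - 1)))) \<bullet> (ga - g')"
      unfolding Dn_def Dn'_def B_def by (rule agd_identity) (use xl_rec[of "Suc n"] in simp)
    finally show ?thesis .
  qed
  have n1: "real n + 1 > 0" by simp
  have cross: "(real n + 1) * ((x (Suc n) - (x n + \<theta> (Suc n) *\<^sub>R (x n - x (n - 1)))) \<bullet> (ga - g'))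
      = (real n + 1) * (dn' \<bullet> (ga - g')) - real n * (dn \<bullet> (ga - g)) - real n * (dn \<bullet> (g - g'))"
  proof -
    have "(x (Suc n) - (x n + \<theta> (Suc n) *\<^sub>R (x n - x (n - 1)))) \<bullet> (ga - g') = dn' \<bullet> (ga - g') - \<theta> (Suc n) * (dn \<bullet> (ga - g'))"
      unfolding dn_def dn'_def by (simp add: inner_diff_left inner_add_left algebra_simps)
    moreover have "dn \<bullet> (ga - g') = dn \<bullet> (ga - g) + dn \<bullet> (g - g')" by (simp add: inner_diff_right)
    moreover have "(real n + 1) * \<theta> (Suc n) = real n" using tau n1 by simp
    ultimately have c1: "(x (Suc n) - (x n + \<theta> (Suc n) *\<^sub>R (x n - x (n - 1)))) \<bullet> (ga - g')
       = dn' \<bullet> (ga - g') - \<theta> (Suc n) * (dn \<bullet> (ga - g) + dn \<bullet> (g - g'))" by simp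
    have "(real n + 1) * ((x (Suc n) - (x n + \<theta> (Suc n) *\<^sub>R (x n - x (n - 1)))) \<bullet> (ga - g'))
       = (real n + 1) * (dn' \<bullet> (ga - g')) - ((real n + 1) * \<theta> (Suc n)) * (dn \<bullet> (ga - g) + dn \<bullet> (g - g'))"
      unfolding c1 by (simp add: algebra_simps)
    also have "\<dots> = (real n + 1) * (dn' \<bullet> (ga - g')) - real n * (dn \<bullet> (ga - g)) - real n * (dn \<bullet> (g - g'))"
      using \<open>(real n + 1) * \<theta> (Suc n) = real n\<close> by (simp add: algebra_simps)
    finally show ?thesis .
  qed
  have EI: "real (Suc n) * E' = (real n * (real n + 1) / 2) * Dn - (real (Suc n) * (real (Suc n) + 1) / 2) * Dn'
       - (real n * (real n + 1) / 2) * B + real (Suc n) * (dn' \<bullet> (ga - g')) - real n * (dn \<bullet> (ga - g)) - real n * (dn \<bullet> (g - g'))"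
  proof -
    have "real (Suc n) * E' = (real n + 1) * (\<tau> (Suc n) * Dn) - (real n + 1) * ((1 + \<tau> (Suc n)) * Dn') - (real n + 1) * (\<tau> (Suc n) * B)
       + (real n + 1) * ((x (Suc n) - (x n + \<theta> (Suc n) *\<^sub>R (x n - x (n - 1)))) \<bullet> (ga - g'))"
      unfolding id0 by (simp add: algebra_simps)
    also have "\<dots> = (real n * (real n + 1) / 2) * Dn - (real (Suc n) * (real (Suc n) + 1) / 2) * Dn'
       - (real n * (real n + 1) / 2) * B + real (Suc n) * (dn' \<bullet> (ga - g')) - real n * (dn \<bullet> (ga - g)) - real n * (dn \<bullet> (g - g'))"
      unfolding cross unfolding tau by (simp add: field_simps)
    finally show ?thesis .
  qed
  have coc: "(norm (g - g'))\<^sup>2 \<le> 2 * Lf * B"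
    unfolding g_def g'_def B_def by (rule cocoercive[OF Fq_props(1)[OF q] Fq_props(2) Fq_props(3)[OF q]])
  have B0: "B \<ge> 0" unfolding B_def g'_def using grad_ineq[OF Fq_props(1)[OF q] Fq_props(2), of "xl (Suc n)" "xl n"] by simp
  have "- (real n * (dn \<bullet> (g - g'))) \<le> real n * (norm dn * norm (g - g'))"
  proof -
    have h: "- (dn \<bullet> (g - g')) \<le> norm dn * norm (g - g')"
      using Cauchy_Schwarz_ineq2[of dn "g - g'"] by (simp add: abs_le_iff)
    show ?thesis using mult_left_mono[OF h, of "real n"] by simp
  qed
  also have "\<dots> = real n * norm dn * norm (g - g')" by simp
  also have "\<dots> \<le> Lf * (norm dn)\<^sup>2 + (real n)\<^sup>2 * B / 2"
    by (rule amgm2[OF coc Lf_props(1)]) (use B0 in auto)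
  also have "(real n)\<^sup>2 * B / 2 \<le> (real n * (real n + 1) / 2) * B"
  proof -
    have "(real n)\<^sup>2 \<le> real n * (real n + 1)" by (simp add: power2_eq_square algebra_simps)
    then have "(real n)\<^sup>2 * B \<le> real n * (real n + 1) * B" using B0 by (rule mult_right_mono)
    then show ?thesis by (simp add: field_simps)
  qed
  finally have cb: "- (real n * (dn \<bullet> (g - g'))) \<le> Lf * (norm dn)\<^sup>2 + (real n * (real n + 1) / 2) * B" by simp
  have IH: "(\<Sum>t=1..n. real t * (Fq q a + Gq q a \<bullet> (x t - a) - ell q t (x t)))
    \<le> - ((real n * (real n + 1) / 2) * Dn) + real n * (dn \<bullet> (ga - g)) + Lf * (\<Sum>t=1..n-1. (norm (x t - x (t - 1)))\<^sup>2)"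
    using Suc.IH unfolding Dn_def dn_def ga_def g_def by simp
  have s1: "(\<Sum>t=1..Suc n. real t * (Fq q a + Gq q a \<bullet> (x t - a) - ell q t (x t)))
      = (\<Sum>t=1..n. real t * (Fq q a + Gq q a \<bullet> (x t - a) - ell q t (x t))) + real (Suc n) * E'"
    unfolding E'_def ga_def by simp
  have s2: "(\<Sum>t=1..Suc n - 1. (norm (x t - x (t - 1)))\<^sup>2) = (\<Sum>t=1..n-1. (norm (x t - x (t - 1)))\<^sup>2) + (norm dn)\<^sup>2"
  proof -
    obtain k where k: "n = Suc k" using Suc.hyps by (cases n) auto
    show ?thesis unfolding dn_def k by (simp add: sum.cl_ivl_Suc)
  qed
  have fin: "(\<Sum>t=1..n. real t * (Fq q a + Gq q a \<bullet> (x t - a) - ell q t (x t))) + real (Suc n) * E'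
     \<le> - ((real (Suc n) * (real (Suc n) + 1) / 2) * Dn') + real (Suc n) * (dn' \<bullet> (ga - g'))
       + (Lf * (\<Sum>t=1..n-1. (norm (x t - x (t - 1)))\<^sup>2) + Lf * (norm dn)\<^sup>2)"
    using IH EI cb by linarith
  show ?case unfolding s1 s2 using fin unfolding Dn'_def ga_def g'_def dn'_def by (simp add: distrib_left)
qed

end

context drao begin

lemma sumsq_split:
  assumes "N \<ge> 1"
  shows "(\<Sum>t=1..N. (norm (x t - x (t - 1)))\<^sup>2) = (\<Sum>t=1..N-1. (norm (x t - x (t - 1)))\<^sup>2) + (norm (x N - x (N - 1)))\<^sup>2"
proof -
  obtain k where k: "N = Suc k" using assms by (cases N) auto
  show ?thesis unfolding k by (simp add: sum.cl_ivl_Suc)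
qed

lemma outer_final:
  assumes q: "q \<in> P" and N: "N \<ge> 1"
  shows "(\<Sum>t=1..N. real t) * Fq q (xbar N) \<le> (\<Sum>t=1..N. real t * ell q t (x t)) + Lf * (\<Sum>t=1..N. (norm (x t - x (t - 1)))\<^sup>2)"
proof -
  define a where "a = xbar N"
  define W where "W = (\<Sum>t=1..N. real t)"
  define ga where "ga = Gq q a"
  define Dd where "Dd = Fq q (xl N) - Fq q a - ga \<bullet> (xl N - a)"
  define dN where "dN = x N - x (N - 1)"
  define gN where "gN = Gq q (xl N)"
  have Wp: "W > 0" unfolding W_def using W_pos[OF N] .
  have oi: "(\<Sum>t=1..N. real t * (Fq q a + ga \<bullet> (x t - a) - ell q t (x t)))
    \<le> - ((real N * (real N + 1) / 2) * Dd) + real N * (dN \<bullet> (ga - gN)) + Lf * (\<Sum>t=1..N-1. (norm (x t - x (t - 1)))\<^sup>2)"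
    using outer_ind[OF q N, of a] unfolding Dd_def dN_def ga_def gN_def .
  have D0: "Dd \<ge> 0" unfolding Dd_def ga_def using grad_ineq[OF Fq_props(1)[OF q] Fq_props(2), of a "xl N"] by simp
  have coc: "(norm (gN - ga))\<^sup>2 \<le> 2 * Lf * Dd"
    unfolding gN_def ga_def Dd_def by (rule cocoercive[OF Fq_props(1)[OF q] Fq_props(2) Fq_props(3)[OF q]])
  have "real N * (dN \<bullet> (ga - gN)) \<le> real N * (norm dN * norm (gN - ga))"
  proof -
    have "dN \<bullet> (ga - gN) \<le> norm dN * norm (ga - gN)" by (rule norm_cauchy_schwarz)
    then show ?thesis by (simp add: norm_minus_commute mult_left_mono)
  qed
  also have "\<dots> = real N * norm dN * norm (gN - ga)" by simp
  also have "\<dots> \<le> Lf * (norm dN)\<^sup>2 + (real N)\<^sup>2 * Dd / 2"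
    by (rule amgm2[OF coc Lf_props(1)]) (use D0 in auto)
  also have "(real N)\<^sup>2 * Dd / 2 \<le> (real N * (real N + 1) / 2) * Dd"
  proof -
    have "(real N)\<^sup>2 \<le> real N * (real N + 1)" by (simp add: power2_eq_square algebra_simps)
    then have "(real N)\<^sup>2 * Dd \<le> real N * (real N + 1) * Dd" using D0 by (rule mult_right_mono)
    then show ?thesis by (simp add: field_simps)
  qed
  finally have cb: "real N * (dN \<bullet> (ga - gN)) \<le> Lf * (norm dN)\<^sup>2 + (real N * (real N + 1) / 2) * Dd" by simp
  have sx: "(\<Sum>t=1..N. real t *\<^sub>R x t) = W *\<^sub>R a"
    unfolding a_def xbar_def W_def using Wp unfolding W_def by simp
  have e1: "(\<Sum>t=1..N. real t * (Fq q a + ga \<bullet> (x t - a) - ell q t (x t)))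
      = (\<Sum>t=1..N. real t * Fq q a) + (\<Sum>t=1..N. real t * (ga \<bullet> (x t - a))) - (\<Sum>t=1..N. real t * ell q t (x t))"
    by (simp add: algebra_simps sum.distrib sum_subtractf)
  have e2: "(\<Sum>t=1..N. real t * Fq q a) = W * Fq q a" unfolding W_def by (simp add: sum_distrib_right)
  have e3: "(\<Sum>t=1..N. real t * (ga \<bullet> (x t - a))) = ga \<bullet> (\<Sum>t=1..N. real t *\<^sub>R (x t - a))"
    by (simp add: inner_sum_right)
  have e4: "(\<Sum>t=1..N. real t *\<^sub>R (x t - a)) = 0"
  proof -
    have "(\<Sum>t=1..N. real t *\<^sub>R (x t - a)) = (\<Sum>t=1..N. real t *\<^sub>R x t) - (\<Sum>t=1..N. real t *\<^sub>R a)"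
      by (simp add: scaleR_diff_right sum_subtractf)
    also have "(\<Sum>t=1..N. real t *\<^sub>R a) = W *\<^sub>R a" unfolding W_def by (simp add: scaleR_sum_left)
    finally show ?thesis using sx by simp
  qed
  have e: "(\<Sum>t=1..N. real t * (Fq q a + ga \<bullet> (x t - a) - ell q t (x t)))
      = W * Fq q a - (\<Sum>t=1..N. real t * ell q t (x t))" unfolding e1 e2 e3 e4 by simp
  show ?thesis using oi cb e sumsq_split[OF N] unfolding a_def[symmetric] W_def[symmetric] dN_def
    by (simp add: distrib_left)
qed

end

context drao begin

definition ux where "ux t = real_of_ereal (u (x t))"

lemma ell_lin: "ell q t w = (\<Sum>i\<in>UNIV. q $ i *\<^sub>R v t i) \<bullet> w - (\<Sum>i\<in>UNIV. q $ i * c t i)"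
  unfolding ell_def by (simp add: inner_sum_left sum_subtractf algebra_simps)

lemma ux_jensen:
  assumes t: "t \<ge> 1"
  shows "u (x t) = ereal (ux t)" "real (S t) * ux t \<le> (\<Sum>s=1..S t. uy t s)"
proof -
  have S1: "S t \<ge> 1" using step_basic(1)[OF t] .
  have r: "\<And>s. s \<in> {1..S t} \<Longrightarrow> u (y t s) = ereal (uy t s)" using primal_at(1)[OF t] by auto
  note J = u_jensen[OF u_convex u_nm _ _ _ S_card[OF t] r]
  show "u (x t) = ereal (ux t)" unfolding ux_def x_avg[OF t] using J(1) S1 by auto
  have "ux t \<le> (\<Sum>s=1..S t. 1 / real (S t) * uy t s)" unfolding ux_def x_avg[OF t] using J(2) S1 by auto
  then have "ux t \<le> (\<Sum>s=1..S t. uy t s) / real (S t)" by (simp add: sum_divide_distrib)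
  then show "real (S t) * ux t \<le> (\<Sum>s=1..S t. uy t s)" using S1 by (simp add: field_simps)
qed

lemma sq_jensen_S:
  assumes t: "t \<ge> 1"
  shows "real (S t) * (norm (w - x t))\<^sup>2 \<le> (\<Sum>s=1..S t. (norm (w - y t s))\<^sup>2)"
proof -
  have S1: "S t \<ge> 1" using step_basic(1)[OF t] .
  have "(norm (w - x t))\<^sup>2 \<le> (\<Sum>s=1..S t. 1 / real (S t) * (norm (w - y t s))\<^sup>2)"
    unfolding x_avg[OF t] by (rule sqnorm_jensen[OF _ _ _ S_card[OF t]]) (use S1 in auto)
  then have "(norm (w - x t))\<^sup>2 \<le> (\<Sum>s=1..S t. (norm (w - y t s))\<^sup>2) / real (S t)" by (simp add: sum_divide_distrib)
  then show ?thesis using S1 by (simp add: field_simps)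
qed

lemma Ls_le:
  assumes t: "t \<ge> 1" "1 \<le> s" "s \<le> S t"
  shows "(\<Sum>i\<in>UNIV. p t s $ i * (v t i \<bullet> xstar - c t i)) - rp t s + uzr \<le> fs"
proof -
  have pin: "p t s \<in> P" using mem_yp t by simp
  have "(\<Sum>i\<in>UNIV. p t s $ i * (v t i \<bullet> xstar - c t i)) \<le> (\<Sum>i\<in>UNIV. p t s $ i * f i xstar)"
  proof (rule sum_mono)
    fix i
    have "v t i \<bullet> xstar - c t i = f i (xl t) + fg i (xl t) \<bullet> (xstar - xl t)"
      unfolding c_def v_def using t by (simp add: inner_diff_right inner_diff_left inner_commute)
    also have "\<dots> \<le> f i xstar" by (rule f_grad_ineq)
    finally show "p t s $ i * (v t i \<bullet> xstar - c t i) \<le> p t s $ i * f i xstar"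
      using P_nonneg[OF pin] by (intro mult_left_mono) auto
  qed
  moreover have "ereal ((\<Sum>i\<in>UNIV. p t s $ i * f i xstar) - rp t s + uzr) \<le> ereal fs"
    using fobj_ge_L[OF pin rp_fin[OF t] uzr] fs by simp
  ultimately show ?thesis by simp
qed

lemma phase_lb:
  assumes t: "t \<ge> 1" and q: "q \<in> P" "\<rho> q = ereal rq"
  shows "lam t * (\<Sum>s=1..S t. Gv q rq t s) \<ge> real t * (ell q t (x t) - rq + ux t - fs)
     + Lf * ((norm (xstar - x t))\<^sup>2 + (norm (x t - x (t - 1)))\<^sup>2 - (norm (xstar - x (t - 1)))\<^sup>2)"
proof -
  define SS where "SS = real (S t)"
  have S1: "S t \<ge> 1" using step_basic(1)[OF t] .
  have SSp: "SS > 0" unfolding SS_def using S1 by simp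
  define b where "b = x (t - 1)"
  have sumy: "(\<Sum>s=1..S t. y t s) = SS *\<^sub>R x t" unfolding SS_def x_def[OF t] using S1 by simp
  have ell_sum: "(\<Sum>s=1..S t. ell q t (y t s)) = SS * ell q t (x t)"
  proof -
    have "(\<Sum>s=1..S t. ell q t (y t s)) = (\<Sum>i\<in>UNIV. q $ i *\<^sub>R v t i) \<bullet> (\<Sum>s=1..S t. y t s) - SS * (\<Sum>i\<in>UNIV. q $ i * c t i)"
      unfolding ell_lin SS_def by (simp add: sum_subtractf inner_sum_right)
    also have "\<dots> = SS * ell q t (x t)" unfolding sumy ell_lin by (simp add: algebra_simps)
    finally show ?thesis .
  qed
  have eta_sum: "(\<Sum>s=1..S t. \<eta> t / 2 * ((norm (xstar - y t s))\<^sup>2 + (norm (y t s - b))\<^sup>2 - (norm (xstar - b))\<^sup>2))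
      = \<eta> t / 2 * ((\<Sum>s=1..S t. (norm (xstar - y t s))\<^sup>2) + (\<Sum>s=1..S t. (norm (b - y t s))\<^sup>2) - SS * (norm (xstar - b))\<^sup>2)"
  proof -
    have "(\<Sum>s=1..S t. \<eta> t / 2 * ((norm (xstar - y t s))\<^sup>2 + (norm (y t s - b))\<^sup>2 - (norm (xstar - b))\<^sup>2))
      = \<eta> t / 2 * (\<Sum>s=1..S t. ((norm (xstar - y t s))\<^sup>2 + (norm (y t s - b))\<^sup>2 - (norm (xstar - b))\<^sup>2))"
      by (rule sum_distrib_left[symmetric])
    also have "(\<Sum>s=1..S t. ((norm (xstar - y t s))\<^sup>2 + (norm (y t s - b))\<^sup>2 - (norm (xstar - b))\<^sup>2))
      = (\<Sum>s=1..S t. (norm (xstar - y t s))\<^sup>2) + (\<Sum>s=1..S t. (norm (b - y t s))\<^sup>2) - SS * (norm (xstar - b))\<^sup>2"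
      unfolding SS_def by (simp add: sum.distrib sum_subtractf norm_minus_commute)
    finally show ?thesis .
  qed
  have G_eq0: "(\<Sum>s=1..S t. Gv q rq t s) = (\<Sum>s=1..S t. ell q t (y t s)) - (\<Sum>s=1..S t. rq) + (\<Sum>s=1..S t. uy t s)
      - (\<Sum>s=1..S t. ((\<Sum>i\<in>UNIV. p t s $ i * (v t i \<bullet> xstar - c t i)) - rp t s + uzr))
      + (\<Sum>s=1..S t. \<eta> t / 2 * ((norm (xstar - y t s))\<^sup>2 + (norm (y t s - b))\<^sup>2 - (norm (xstar - b))\<^sup>2))"
    unfolding Gv_def ell_def[symmetric] b_def by (simp add: sum.distrib sum_subtractf)
  have G_eq: "(\<Sum>s=1..S t. Gv q rq t s) = (\<Sum>s=1..S t. ell q t (y t s)) - SS * rq + (\<Sum>s=1..S t. uy t s)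
      - (\<Sum>s=1..S t. ((\<Sum>i\<in>UNIV. p t s $ i * (v t i \<bullet> xstar - c t i)) - rp t s + uzr))
      + \<eta> t / 2 * ((\<Sum>s=1..S t. (norm (xstar - y t s))\<^sup>2) + (\<Sum>s=1..S t. (norm (b - y t s))\<^sup>2) - SS * (norm (xstar - b))\<^sup>2)"
    unfolding G_eq0 eta_sum by (simp add: SS_def)
  have L: "(\<Sum>s=1..S t. ((\<Sum>i\<in>UNIV. p t s $ i * (v t i \<bullet> xstar - c t i)) - rp t s + uzr)) \<le> SS * fs"
  proof -
    have "(\<Sum>s=1..S t. ((\<Sum>i\<in>UNIV. p t s $ i * (v t i \<bullet> xstar - c t i)) - rp t s + uzr)) \<le> (\<Sum>s=1..S t. fs)"
      using Ls_le[OF t] by (intro sum_mono) auto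
    then show ?thesis unfolding SS_def by simp
  qed
  have U: "SS * ux t \<le> (\<Sum>s=1..S t. uy t s)" unfolding SS_def using ux_jensen(2)[OF t] .
  have N1: "SS * (norm (xstar - x t))\<^sup>2 \<le> (\<Sum>s=1..S t. (norm (xstar - y t s))\<^sup>2)"
    unfolding SS_def by (rule sq_jensen_S[OF t])
  have N2: "SS * (norm (b - x t))\<^sup>2 \<le> (\<Sum>s=1..S t. (norm (b - y t s))\<^sup>2)"
    unfolding SS_def by (rule sq_jensen_S[OF t])
  have eta: "\<eta> t \<ge> 0" using step_basic(8)[OF t] .
  have "\<eta> t / 2 * (SS * (norm (xstar - x t))\<^sup>2 + SS * (norm (b - x t))\<^sup>2 - SS * (norm (xstar - b))\<^sup>2)
      \<le> \<eta> t / 2 * ((\<Sum>s=1..S t. (norm (xstar - y t s))\<^sup>2) + (\<Sum>s=1..S t. (norm (b - y t s))\<^sup>2) - SS * (norm (xstar - b))\<^sup>2)"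
    using N1 N2 eta by (intro mult_left_mono) auto
  then have lb: "(\<Sum>s=1..S t. Gv q rq t s) \<ge> SS * (ell q t (x t) - rq + ux t - fs)
      + \<eta> t / 2 * (SS * ((norm (xstar - x t))\<^sup>2 + (norm (b - x t))\<^sup>2 - (norm (xstar - b))\<^sup>2))"
    unfolding G_eq ell_sum using L U by (simp add: algebra_simps)
  have lp: "lam t > 0" using step_basic(15)[OF t] .
  have "lam t * (\<Sum>s=1..S t. Gv q rq t s) \<ge> lam t * (SS * (ell q t (x t) - rq + ux t - fs)
      + \<eta> t / 2 * (SS * ((norm (xstar - x t))\<^sup>2 + (norm (b - x t))\<^sup>2 - (norm (xstar - b))\<^sup>2)))"
    using lb lp by (intro mult_left_mono) auto
  also have "lam t * (SS * (ell q t (x t) - rq + ux t - fs)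
      + \<eta> t / 2 * (SS * ((norm (xstar - x t))\<^sup>2 + (norm (b - x t))\<^sup>2 - (norm (xstar - b))\<^sup>2)))
    = (lam t * SS) * (ell q t (x t) - rq + ux t - fs)
      + ((lam t * SS) * \<eta> t) / 2 * ((norm (xstar - x t))\<^sup>2 + (norm (b - x t))\<^sup>2 - (norm (xstar - b))\<^sup>2)"
    by (simp add: algebra_simps)
  also have "\<dots> = real t * (ell q t (x t) - rq + ux t - fs)
      + Lf * ((norm (xstar - x t))\<^sup>2 + (norm (x t - x (t - 1)))\<^sup>2 - (norm (xstar - x (t - 1)))\<^sup>2)"
    using step_basic(12,14)[OF t] unfolding SS_def b_def by (simp add: norm_minus_commute)
  finally show ?thesis .
qed

end

lemma sum_comb:
  fixes e w a d b :: "nat \<Rightarrow> real"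
  shows "(\<Sum>t\<in>A. real t * (e t - rq + w t - fs) + L * (a t + d t - b t))
    = (\<Sum>t\<in>A. real t * e t) - (\<Sum>t\<in>A. real t) * rq + (\<Sum>t\<in>A. real t * w t) - (\<Sum>t\<in>A. real t) * fs
      + L * ((\<Sum>t\<in>A. a t) - (\<Sum>t\<in>A. b t)) + L * (\<Sum>t\<in>A. d t)"
  by (simp add: sum.distrib sum_subtractf sum_distrib_left sum_distrib_right algebra_simps)

lemma sum_real_N: "(\<Sum>t=1..N. real t) = real N * (real N + 1) / 2"
  by (induction N) (auto simp: field_simps)

context drao begin

lemma u_xbar:
  assumes N: "N \<ge> 1"
  shows "u (xbar N) = ereal (real_of_ereal (u (xbar N)))"
    "(\<Sum>t=1..N. real t) * real_of_ereal (u (xbar N)) \<le> (\<Sum>t=1..N. real t * ux t)"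
proof -
  have W: "(\<Sum>t=1..N. real t) > 0" using W_pos[OF N] .
  have r: "\<And>t. t \<in> {1..N} \<Longrightarrow> u (x t) = ereal (ux t)" using ux_jensen(1) by auto
  have w0: "\<And>t. t \<in> {1..N} \<Longrightarrow> real t / (\<Sum>t=1..N. real t) \<ge> 0" using W by simp
  note J = u_jensen[OF u_convex u_nm _ _ w0 xbar_w[OF N] r]
  show "u (xbar N) = ereal (real_of_ereal (u (xbar N)))" unfolding xbar_avg using J(1) N by auto
  have "real_of_ereal (u (xbar N)) \<le> (\<Sum>t=1..N. real t / (\<Sum>t=1..N. real t) * ux t)"
    unfolding xbar_avg using J(2) N by auto
  also have "\<dots> = (\<Sum>t=1..N. real t * ux t) / (\<Sum>t=1..N. real t)"
    by (simp add: sum_divide_distrib)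
  finally show "(\<Sum>t=1..N. real t) * real_of_ereal (u (xbar N)) \<le> (\<Sum>t=1..N. real t * ux t)"
    using W by (simp add: field_simps)
qed

lemma main_ineq:
  assumes q: "q \<in> P" "\<rho> q = ereal rq" and N: "N \<ge> 1"
  shows "(\<Sum>t=1..N. real t) * (Fq q (xbar N) - rq + real_of_ereal (u (xbar N)) - fs) + Lf * (norm (xstar - x N))\<^sup>2
     \<le> Lf * R0\<^sup>2 + DP * R0 / \<Delta>"
proof -
  define W where "W = (\<Sum>t=1..N. real t)"
  define ua where "ua = real_of_ereal (u (xbar N))"
  have SN: "1 \<le> S N" using step_basic(1)[OF N] .
  have T1: "Tsum q rq N (S N) \<le> DP * R0 / \<Delta>"
    using telescope[OF q N order.refl] Phi_lower(1)[OF q(1) N SN order.refl] Phi_10[OF q(1)] by linarith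
  have T2: "Tsum q rq N (S N) = (\<Sum>t=1..N. lam t * (\<Sum>s=1..S t. Gv q rq t s))"
    unfolding Tsum_def Iset_full[OF N]
    by (simp add: sum.Sigma[symmetric] sum_distrib_left)
  have T3: "(\<Sum>t=1..N. lam t * (\<Sum>s=1..S t. Gv q rq t s)) \<ge>
      (\<Sum>t=1..N. real t * (ell q t (x t) - rq + ux t - fs)
         + Lf * ((norm (xstar - x t))\<^sup>2 + (norm (x t - x (t - 1)))\<^sup>2 - (norm (xstar - x (t - 1)))\<^sup>2))"
    by (rule sum_mono) (use phase_lb q in auto)
  have T4: "(\<Sum>t=1..N. (norm (xstar - x t))\<^sup>2) - (\<Sum>t=1..N. (norm (xstar - x (t - 1)))\<^sup>2)
       = (norm (xstar - x N))\<^sup>2 - (norm (xstar - x 0))\<^sup>2"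
    using sum_telescope_real[of "\<lambda>t. (norm (xstar - x t))\<^sup>2" N] by (simp add: sum_subtractf)
  have O: "W * Fq q (xbar N) \<le> (\<Sum>t=1..N. real t * ell q t (x t)) + Lf * (\<Sum>t=1..N. (norm (x t - x (t - 1)))\<^sup>2)"
    unfolding W_def using outer_final[OF q(1) N] .
  have U: "W * ua \<le> (\<Sum>t=1..N. real t * ux t)" unfolding W_def ua_def using u_xbar(2)[OF N] .
  have R: "Lf * (norm (xstar - x 0))\<^sup>2 \<le> Lf * R0\<^sup>2"
    using R0_ge Lf_props(1) by (intro mult_left_mono power_mono) (auto simp: norm_minus_commute)
  have "W * (Fq q (xbar N) - rq + ua - fs) + Lf * (norm (xstar - x N))\<^sup>2 \<le> Lf * R0\<^sup>2 + DP * R0 / \<Delta>"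
  proof -
    have T4': "Lf * ((\<Sum>t=1..N. (norm (xstar - x t))\<^sup>2) - (\<Sum>t=1..N. (norm (xstar - x (t - 1)))\<^sup>2))
       = Lf * (norm (xstar - x N))\<^sup>2 - Lf * (norm (xstar - x 0))\<^sup>2"
      unfolding T4 by (simp add: right_diff_distrib)
    show ?thesis using T1 T2 T3[unfolded sum_comb] T4' O U R unfolding W_def[symmetric]
      by (simp only: distrib_left right_diff_distrib)
  qed
  then show ?thesis unfolding W_def ua_def .
qed

lemma fobj_le:
  assumes uw: "u w = ereal uw" and K: "\<And>q rq. q \<in> P \<Longrightarrow> \<rho> q = ereal rq \<Longrightarrow> Fq q w - rq \<le> K"
  shows "fobj P f \<rho> u w \<le> ereal (K + uw)"
proof -
  have "(SUP q\<in>P. ereal (\<Sum>i\<in>UNIV. q $ i * f i w) - \<rho> q) \<le> ereal K"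
  proof (rule SUP_least)
    fix q assume q: "q \<in> P"
    show "ereal (\<Sum>i\<in>UNIV. q $ i * f i w) - \<rho> q \<le> ereal K"
    proof (cases "\<rho> q")
      case (real r)
      then show ?thesis using K[OF q real] unfolding Fq_def by simp
    next
      case PInf then show ?thesis by simp
    next
      case MInf then show ?thesis using \<rho>_nm[OF q] by simp
    qed
  qed
  then show ?thesis unfolding fobj_def uw using add_right_mono[of _ "ereal K" "ereal uw"] by simp
qed

lemma fobj_ge: "w \<in> X \<Longrightarrow> ereal fs \<le> fobj P f \<rho> u w"
  using xstar_opt fs by metis

lemma xbar_bound:
  assumes N: "N \<ge> 1"
  shows "fobj P f \<rho> u (xbar N) \<le> ereal (fs + (Lf * R0\<^sup>2 + DP * R0 / \<Delta> - Lf * (norm (xstar - x N))\<^sup>2) / (\<Sum>t=1..N. real t))"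
proof -
  define W where "W = (\<Sum>t=1..N. real t)"
  have W: "W > 0" unfolding W_def using W_pos[OF N] .
  define ua where "ua = real_of_ereal (u (xbar N))"
  have "fobj P f \<rho> u (xbar N) \<le> ereal ((fs - ua + (Lf * R0\<^sup>2 + DP * R0 / \<Delta> - Lf * (norm (xstar - x N))\<^sup>2) / W) + ua)"
  proof (rule fobj_le)
    show "u (xbar N) = ereal ua" unfolding ua_def using u_xbar(1)[OF N] .
    fix q rq assume q: "q \<in> P" "\<rho> q = ereal rq"
    have "W * (Fq q (xbar N) - rq + ua - fs) + Lf * (norm (xstar - x N))\<^sup>2 \<le> Lf * R0\<^sup>2 + DP * R0 / \<Delta>"
      using main_ineq[OF q N] unfolding W_def ua_def .
    then have "W * (Fq q (xbar N) - rq) \<le> W * (fs - ua) + (Lf * R0\<^sup>2 + DP * R0 / \<Delta> - Lf * (norm (xstar - x N))\<^sup>2)"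
      by (simp add: algebra_simps)
    then show "Fq q (xbar N) - rq \<le> fs - ua + (Lf * R0\<^sup>2 + DP * R0 / \<Delta> - Lf * (norm (xstar - x N))\<^sup>2) / W"
      using W by (simp add: field_simps)
  qed
  then show ?thesis unfolding W_def by simp
qed

lemma dist_bound:
  assumes N: "N \<ge> 1"
  shows "Lf * (norm (xstar - x N))\<^sup>2 \<le> Lf * R0\<^sup>2 + DP * R0 / \<Delta>"
proof -
  define W where "W = (\<Sum>t=1..N. real t)"
  have W: "W > 0" unfolding W_def using W_pos[OF N] .
  have "ereal fs \<le> ereal (fs + (Lf * R0\<^sup>2 + DP * R0 / \<Delta> - Lf * (norm (xstar - x N))\<^sup>2) / W)"
    using fobj_ge[OF xbar_mem[OF N]] xbar_bound[OF N] unfolding W_def by (rule order.trans)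
  then have "0 \<le> (Lf * R0\<^sup>2 + DP * R0 / \<Delta> - Lf * (norm (xstar - x N))\<^sup>2) / W" by simp
  then show ?thesis using W by (simp add: zero_le_divide_iff)
qed

end

context drao begin

lemma Iset_props:
  assumes "i \<in> Iset t s" "s \<le> S t" "t \<ge> 1"
  shows "fst i \<ge> 1" "1 \<le> snd i" "snd i \<le> S (fst i)"
  using assms unfolding Iset_def by auto

lemma Gv_lb0:
  assumes L0: "Lf = 0" and t: "t \<ge> 1" "1 \<le> s" "s \<le> S t" and q: "q \<in> P"
  shows "Gv q rq t s \<ge> Fq q (y t s) - rq + uy t s - fs"
proof -
  have eta: "\<eta> t = 0" unfolding \<eta>_def L0 by simp
  have "Fq q (y t s) \<le> Fq q (xl t) + Gq q (xl t) \<bullet> (y t s - xl t) + Lf / 2 * (norm (y t s - xl t))\<^sup>2"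
    by (rule descent[OF Fq_props(2) Fq_props(3)[OF q]])
  then have "Fq q (y t s) \<le> ell q t (y t s)" using ell_eq[OF t(1)] L0 by simp
  then show ?thesis using Ls_le[OF t] unfolding Gv_def ell_def eta by simp
qed

lemma y_bound0:
  assumes L0: "Lf = 0" and t: "t \<ge> 1" "1 \<le> s" "s \<le> S t"
  shows "norm (y t s - xstar) \<le> max 1 (2 * (DP / \<Delta> + DP * R0 / \<Delta>) / kap)"
proof -
  define I where "I = Iset t s"
  define e where "e = norm (y t s - xstar)"
  define B where "B = DP * R0 / \<Delta> - (kap / 2 * e\<^sup>2 - DP / \<Delta> * e)"
  define \<Lambda> where "\<Lambda> = (\<Sum>i\<in>I. lam (fst i))"
  define wt where "wt = (\<lambda>i::nat\<times>nat. lam (fst i) / \<Lambda>)"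
  define yy where "yy = (\<lambda>i::nat\<times>nat. y (fst i) (snd i))"
  define yh where "yh = (\<Sum>i\<in>I. wt i *\<^sub>R yy i)"
  have fin: "finite I" unfolding I_def by (rule Iset_finite)
  have mem: "(t, s) \<in> I" unfolding I_def Iset_def using t by auto
  have ne: "I \<noteq> {}" using mem by auto
  have ip: "\<And>i. i \<in> I \<Longrightarrow> fst i \<ge> 1 \<and> 1 \<le> snd i \<and> snd i \<le> S (fst i)"
    using Iset_props t(3) t(1) unfolding I_def by blast
  have lpos: "\<And>i. i \<in> I \<Longrightarrow> lam (fst i) > 0" using ip step_basic(15) by blast
  have \<Lambda>p: "\<Lambda> > 0" unfolding \<Lambda>_def by (rule sum_pos[OF fin ne lpos])
  have wt0: "\<And>i. i \<in> I \<Longrightarrow> wt i \<ge> 0" unfolding wt_def using lpos \<Lambda>p by (simp add: less_imp_le)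
  have wt1: "(\<Sum>i\<in>I. wt i) = 1" unfolding wt_def using \<Lambda>p by (simp add: sum_divide_distrib[symmetric] \<Lambda>_def)
  have yyX: "\<And>i. i \<in> I \<Longrightarrow> yy i \<in> X" unfolding yy_def using ip mem_yp by blast
  have yhX: "yh \<in> X" unfolding yh_def by (rule convex_sum[OF fin X_convex wt1 wt0 yyX])
  have ur: "\<And>i. i \<in> I \<Longrightarrow> u (yy i) = ereal (uy (fst i) (snd i))" unfolding yy_def using ip primal_at(1) by blast
  note J = u_jensen[OF u_convex u_nm fin ne wt0 wt1 ur]
  define uh where "uh = real_of_ereal (u yh)"
  have uh: "u yh = ereal uh" unfolding uh_def yh_def using J(1) .
  have uhle: "\<Lambda> * uh \<le> (\<Sum>i\<in>I. lam (fst i) * uy (fst i) (snd i))"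
  proof -
    have "uh \<le> (\<Sum>i\<in>I. wt i * uy (fst i) (snd i))" unfolding uh_def yh_def using J(2) .
    also have "\<dots> = (\<Sum>i\<in>I. lam (fst i) * uy (fst i) (snd i)) / \<Lambda>" unfolding wt_def by (simp add: sum_divide_distrib)
    finally show ?thesis using \<Lambda>p by (simp add: field_simps)
  qed
  have Ph: "Phi q t s \<ge> kap / 2 * e\<^sup>2 - DP / \<Delta> * e" if "q \<in> P" for q
    unfolding e_def using Phi_lower(2)[OF that t] .
  have key: "Fq q yh - rq \<le> fs - uh + B / \<Lambda>" if q: "q \<in> P" "\<rho> q = ereal rq" for q rq
  proof -
    have Fle: "\<Lambda> * Fq q yh \<le> (\<Sum>i\<in>I. lam (fst i) * Fq q (yy i))"
    proof -
      have "Fq q yh \<le> (\<Sum>i\<in>I. wt i * Fq q (yy i))" unfolding yh_def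
        by (rule convex_on_sum[OF fin ne Fq_props(1)[OF q(1)] wt1 wt0]) auto
      also have "\<dots> = (\<Sum>i\<in>I. lam (fst i) * Fq q (yy i)) / \<Lambda>" unfolding wt_def by (simp add: sum_divide_distrib)
      finally show ?thesis using \<Lambda>p by (simp add: field_simps)
    qed
    have "Tsum q rq t s = (\<Sum>i\<in>I. lam (fst i) * Gv q rq (fst i) (snd i))"
      unfolding Tsum_def I_def by (simp add: case_prod_beta)
    also have "\<dots> \<ge> (\<Sum>i\<in>I. lam (fst i) * (Fq q (yy i) - rq + uy (fst i) (snd i) - fs))"
      unfolding yy_def using Gv_lb0[OF L0 _ _ _ q(1)] ip lpos
      by (intro sum_mono mult_left_mono) (auto simp: less_imp_le)
    finally have T: "(\<Sum>i\<in>I. lam (fst i) * (Fq q (yy i) - rq + uy (fst i) (snd i) - fs)) \<le> Tsum q rq t s" .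
    have T2: "(\<Sum>i\<in>I. lam (fst i) * (Fq q (yy i) - rq + uy (fst i) (snd i) - fs))
       = (\<Sum>i\<in>I. lam (fst i) * Fq q (yy i)) - \<Lambda> * rq + (\<Sum>i\<in>I. lam (fst i) * uy (fst i) (snd i)) - \<Lambda> * fs"
    proof -
      have "(\<Sum>i\<in>I. lam (fst i) * (Fq q (yy i) - rq + uy (fst i) (snd i) - fs))
         = (\<Sum>i\<in>I. (lam (fst i) * Fq q (yy i) + lam (fst i) * uy (fst i) (snd i)) - (lam (fst i) * rq + lam (fst i) * fs))"
        by (rule sum.cong) (simp_all add: algebra_simps)
      also have "\<dots> = (\<Sum>i\<in>I. lam (fst i) * Fq q (yy i)) + (\<Sum>i\<in>I. lam (fst i) * uy (fst i) (snd i))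
          - ((\<Sum>i\<in>I. lam (fst i)) * rq + (\<Sum>i\<in>I. lam (fst i)) * fs)"
        by (simp only: sum_subtractf sum.distrib sum_distrib_right)
      finally show ?thesis unfolding \<Lambda>_def by simp
    qed
    have T3: "Tsum q rq t s \<le> B"
      using telescope[OF q t(1) t(3)] Phi_10[OF q(1)] Ph[OF q(1)] unfolding B_def by linarith
    have "\<Lambda> * (Fq q yh - rq) \<le> \<Lambda> * (fs - uh) + B"
      using T T2 T3 Fle uhle by (simp add: algebra_simps)
    then show ?thesis using \<Lambda>p by (simp add: field_simps)
  qed
  have fb: "fobj P f \<rho> u yh \<le> ereal (fs + B / \<Lambda>)" using fobj_le[OF uh key] by simp
  have "ereal fs \<le> ereal (fs + B / \<Lambda>)" by (rule order.trans[OF fobj_ge[OF yhX] fb])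
  then have "B \<ge> 0" using \<Lambda>p by (simp add: zero_le_divide_iff)
  then have ineq: "kap / 2 * e\<^sup>2 \<le> DP / \<Delta> * e + DP * R0 / \<Delta>" unfolding B_def by linarith
  have kp: "kap > 0" unfolding kap_def using DP_pos \<Delta>_pos R0_pos by simp
  have cpos: "DP * R0 / \<Delta> \<ge> 0" "DP / \<Delta> \<ge> 0" using DP_pos \<Delta>_pos R0_pos by auto
  show ?thesis
  proof (cases "e \<le> 1")
    case True then show ?thesis unfolding e_def by simp
  next
    case False
    then have e1: "e \<ge> 1" by simp
    have "DP * R0 / \<Delta> * 1 \<le> DP * R0 / \<Delta> * e" using e1 cpos by (intro mult_left_mono) auto
    then have "DP * R0 / \<Delta> \<le> DP * R0 / \<Delta> * e" by simp
    moreover have "kap / 2 * e * e = kap / 2 * e\<^sup>2" by (simp add: power2_eq_square)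
    moreover have "(DP / \<Delta> + DP * R0 / \<Delta>) * e = DP / \<Delta> * e + DP * R0 / \<Delta> * e" by (simp add: algebra_simps)
    ultimately have "kap / 2 * e * e \<le> (DP / \<Delta> + DP * R0 / \<Delta>) * e" using ineq by linarith
    then have "kap / 2 * e \<le> DP / \<Delta> + DP * R0 / \<Delta>" using e1 by (simp add: mult_le_cancel_right)
    then have "e \<le> 2 * (DP / \<Delta> + DP * R0 / \<Delta>) / kap" using kp by (simp add: field_simps)
    then show ?thesis unfolding e_def by simp
  qed
qed

lemma x_bounded: "\<exists>R. \<forall>t. norm (x t - xstar) \<le> R"
proof (cases "Lf = 0")
  case True
  define E0 where "E0 = max 1 (2 * (DP / \<Delta> + DP * R0 / \<Delta>) / kap)"
  have "norm (x t - xstar) \<le> max R0 E0" for t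
  proof (cases "t = 0")
    case True then show ?thesis using R0_ge by (simp add: norm_minus_commute)
  next
    case False
    then have t: "t \<ge> 1" by simp
    have S1: "S t \<ge> 1" using step_basic(1)[OF t] .
    have e1: "(\<Sum>s=1..S t. (1 / real (S t)) *\<^sub>R (y t s - xstar))
        = (\<Sum>s=1..S t. (1 / real (S t)) *\<^sub>R y t s) - (\<Sum>s=1..S t. (1 / real (S t)) *\<^sub>R xstar)"
      by (simp add: scaleR_diff_right sum_subtractf)
    have e2: "(\<Sum>s=1..S t. (1 / real (S t)) *\<^sub>R xstar) = xstar"
      by (simp only: scaleR_sum_left[symmetric] S_card[OF t]) simp
    have eqx: "x t - xstar = (\<Sum>s=1..S t. (1 / real (S t)) *\<^sub>R (y t s - xstar))"
      unfolding e1 e2 x_avg[OF t] ..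
    have "norm (x t - xstar) \<le> (\<Sum>s=1..S t. norm ((1 / real (S t)) *\<^sub>R (y t s - xstar)))"
      unfolding eqx by (rule norm_sum)
    also have "\<dots> \<le> (\<Sum>s=1..S t. (1 / real (S t)) * E0)"
      using y_bound0[OF True t] unfolding E0_def by (intro sum_mono) (auto simp: divide_right_mono)
    also have "\<dots> = E0" using S1 by simp
    finally show ?thesis by simp
  qed
  then show ?thesis by blast
next
  case False
  then have Lp: "Lf > 0" using Lf_props(1) by simp
  define C where "C = Lf * R0\<^sup>2 + DP * R0 / \<Delta>"
  have "norm (x t - xstar) \<le> max R0 (sqrt (C / Lf))" for t
  proof (cases "t = 0")
    case True then show ?thesis using R0_ge by (simp add: norm_minus_commute)
  next
    case False
    then have t: "t \<ge> 1" by simp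
    have "Lf * (norm (xstar - x t))\<^sup>2 \<le> C" unfolding C_def by (rule dist_bound[OF t])
    then have "(norm (x t - xstar))\<^sup>2 \<le> C / Lf" using Lp by (simp add: field_simps norm_minus_commute)
    then have "norm (x t - xstar) \<le> sqrt (C / Lf)" by (simp add: real_le_rsqrt)
    then show ?thesis by simp
  qed
  then show ?thesis by blast
qed

lemma xl_bounded:
  assumes R: "\<And>t. norm (x t - xstar) \<le> R"
  shows "norm (xl t - xstar) \<le> 3 * R"
proof (induction t)
  case 0
  have a: "norm (xl 0 - xstar) \<le> R" using R[of 0] xl0 by simp
  have b: "0 \<le> norm (xl 0 - xstar)" by simp
  from a b show ?case by linarith
next
  case (Suc t)
  define th where "th = \<theta> (Suc t)"
  define ta where "ta = \<tau> (Suc t)"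
  have th: "0 \<le> th" "th \<le> 1" unfolding th_def \<theta>_def by auto
  have ta: "ta \<ge> 0" unfolding ta_def \<tau>_def by simp
  have R0: "R \<ge> 0" using R[of 0] norm_ge_zero[of "x 0 - xstar"] by linarith
  define xt where "xt = x t + th *\<^sub>R (x t - x (t - 1))"
  have "xt - xstar = (1 + th) *\<^sub>R (x t - xstar) - th *\<^sub>R (x (t - 1) - xstar)"
    unfolding xt_def by (simp add: algebra_simps)
  then have "norm (xt - xstar) \<le> (1 + th) * R + th * R"
    using norm_triangle_ineq4[of "(1 + th) *\<^sub>R (x t - xstar)" "th *\<^sub>R (x (t - 1) - xstar)"] R[of t] R[of "t - 1"] th
    by (smt (verit, best) mult_left_mono norm_scaleR abs_of_nonneg)
  moreover have "(1 + th) * R + th * R = R + 2 * (th * R)" by (simp add: algebra_simps)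
  moreover have "th * R \<le> R" using th R0 by (intro mult_left_le_one_le) auto
  ultimately have xtb: "norm (xt - xstar) \<le> 3 * R" by linarith
  have xldef: "xl (Suc t) = (1 / (1 + ta)) *\<^sub>R (xt + ta *\<^sub>R xl t)"
    unfolding xl_def[of "Suc t", simplified] xt_def th_def ta_def by simp
  have xs: "(1 / (1 + ta)) *\<^sub>R ((1 + ta) *\<^sub>R xstar) = xstar" using ta by simp
  have "xl (Suc t) - xstar = (1 / (1 + ta)) *\<^sub>R (xt + ta *\<^sub>R xl t) - (1 / (1 + ta)) *\<^sub>R ((1 + ta) *\<^sub>R xstar)"
    unfolding xs using xldef by simp
  also have "\<dots> = (1 / (1 + ta)) *\<^sub>R ((xt + ta *\<^sub>R xl t) - (1 + ta) *\<^sub>R xstar)" by (simp only: scaleR_diff_right)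
  also have "(xt + ta *\<^sub>R xl t) - (1 + ta) *\<^sub>R xstar = (xt - xstar) + ta *\<^sub>R (xl t - xstar)" by (simp add: algebra_simps)
  finally have "xl (Suc t) - xstar = (1 / (1 + ta)) *\<^sub>R ((xt - xstar) + ta *\<^sub>R (xl t - xstar))" .
  then have nx: "norm (xl (Suc t) - xstar) = (1 / (1 + ta)) * norm ((xt - xstar) + ta *\<^sub>R (xl t - xstar))"
    using ta by simp
  have "norm ((xt - xstar) + ta *\<^sub>R (xl t - xstar)) \<le> norm (xt - xstar) + ta * norm (xl t - xstar)"
    using ta norm_triangle_ineq[of "xt - xstar" "ta *\<^sub>R (xl t - xstar)"] by simp
  then have "norm (xl (Suc t) - xstar) \<le> (1 / (1 + ta)) * (norm (xt - xstar) + ta * norm (xl t - xstar))"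
    unfolding nx using ta by (intro mult_left_mono) auto
  also have "\<dots> \<le> (1 / (1 + ta)) * (3 * R + ta * (3 * R))"
    using xtb Suc.IH ta by (intro mult_left_mono add_mono) auto
  also have "\<dots> = 3 * R" using ta by (simp add: field_simps)
  finally show ?case .
qed

lemma M_bounded: "\<exists>Mtil. \<forall>t\<ge>1. M t \<le> Mtil"
proof -
  obtain R where R: "\<And>t. norm (x t - xstar) \<le> R" using x_bounded by blast
  obtain Lc where Lc: "\<And>i. (Lc i)-lipschitz_on UNIV (fg i)" using Lc_ex by blast
  obtain C where C: "C > 0" "\<And>V::'m \<Rightarrow> real^'n. Mconst NU V \<le> C * (\<Sum>i\<in>UNIV. norm (V i))"
    using Mconst_le[OF NU_norm] by blast
  have "M t \<le> C * (\<Sum>i\<in>UNIV. norm (fg i xstar) + Lc i * (3 * R))" if t: "t \<ge> 1" for t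
  proof -
    have "M t \<le> C * (\<Sum>i\<in>UNIV. norm (v t i))" unfolding M_def by (rule C(2))
    also have "\<dots> \<le> C * (\<Sum>i\<in>UNIV. norm (fg i xstar) + Lc i * (3 * R))"
    proof (intro mult_left_mono sum_mono)
      fix i
      have vi: "v t i = fg i (xl t)" using v_def t by simp
      have "norm (fg i (xl t) - fg i xstar) \<le> Lc i * norm (xl t - xstar)"
        using lipschitz_onD[OF Lc[of i], of "xl t" xstar] by (simp add: dist_norm)
      also have "\<dots> \<le> Lc i * (3 * R)"
        using xl_bounded[OF R, of t] lipschitz_on_nonneg[OF Lc[of i]] by (intro mult_left_mono) auto
      finally have "norm (fg i (xl t) - fg i xstar) \<le> Lc i * (3 * R)" .
      then show "norm (v t i) \<le> norm (fg i xstar) + Lc i * (3 * R)"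
        unfolding vi using norm_triangle_ineq2[of "fg i (xl t)" "fg i xstar"] by linarith
    qed (use C(1) in simp)
    finally show ?thesis .
  qed
  then show ?thesis by blast
qed

end

lemma arith1: fixes K D A B :: real assumes "K > 0" "D > 0"
  shows "(A + B / D) / (K / 2) = 2 * A / K + 2 * B / (K * D)"
  using assms by (simp add: field_simps)

lemma arith2: fixes K D L R :: real assumes "K > 0" "D > 0"
  shows "2 * L * R\<^sup>2 / K + 2 * (L * R * D) * R / (K * D) = 4 * L * R\<^sup>2 / K"
  using assms by (simp add: field_simps power2_eq_square)

context drao begin

lemma final_bound:
  assumes N: "N \<ge> 1"
  shows "fobj P f \<rho> u (xbar N) - fobj P f \<rho> u xstar
     \<le> ereal (2 * Lf * R0\<^sup>2 / (real N * (real N + 1)) + 2 * DP * R0 / (real N * (real N + 1) * \<Delta>))"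
proof -
  define W where "W = (\<Sum>t=1..N. real t)"
  define C where "C = Lf * R0\<^sup>2 + DP * R0 / \<Delta>"
  have W: "W > 0" unfolding W_def using W_pos[OF N] .
  have Wv: "W = real N * (real N + 1) / 2" unfolding W_def by (rule sum_real_N)
  have d0: "Lf * (norm (xstar - x N))\<^sup>2 \<ge> 0" using Lf_props(1) by simp
  have "fobj P f \<rho> u (xbar N) \<le> ereal (fs + (C - Lf * (norm (xstar - x N))\<^sup>2) / W)"
    using xbar_bound[OF N] unfolding C_def W_def .
  also have "(C - Lf * (norm (xstar - x N))\<^sup>2) / W \<le> C / W" using d0 W by (simp add: divide_right_mono)
  also have "C / W = 2 * Lf * R0\<^sup>2 / (real N * (real N + 1)) + 2 * DP * R0 / (real N * (real N + 1) * \<Delta>)"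
  proof -
    have nn: "real N * (real N + 1) > 0" using N by simp
    show ?thesis unfolding C_def Wv using arith1[OF nn \<Delta>_pos, of "Lf * R0\<^sup>2" "DP * R0"] by (simp add: mult.assoc)
  qed
  finally have b: "fobj P f \<rho> u (xbar N) \<le> ereal (fs + (2 * Lf * R0\<^sup>2 / (real N * (real N + 1)) + 2 * DP * R0 / (real N * (real N + 1) * \<Delta>)))"
    by simp
  show ?thesis unfolding fs using b by (cases "fobj P f \<rho> u (xbar N)") auto
qed

lemma tuned_bound:
  assumes "\<Delta> = DP / (Lf * R0)" "N \<ge> 1"
  shows "2 * Lf * R0\<^sup>2 / (real N * (real N + 1)) + 2 * DP * R0 / (real N * (real N + 1) * \<Delta>)
     = 4 * Lf * R0\<^sup>2 / (real N * (real N + 1))"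
proof -
  have "Lf \<noteq> 0" using assms(1) \<Delta>_pos by auto
  have nn: "real N * (real N + 1) > 0" using assms(2) by simp
  have DPe: "DP = Lf * R0 * \<Delta>" using assms(1) \<open>Lf \<noteq> 0\<close> R0_pos by (simp add: field_simps)
  show ?thesis unfolding DPe using arith2[OF nn \<Delta>_pos, of Lf R0] by (simp add: mult.assoc mult.commute mult.left_commute)
qed

end

theorem theorem4p1:
  fixes X :: "(real^'n::finite) set"
    and P :: "(real^'m::finite) set"
    and \<rho> :: "real^'m \<Rightarrow> ereal"
    and u :: "real^'n \<Rightarrow> ereal"
    and f :: "'m \<Rightarrow> real^'n \<Rightarrow> real"
    and fg :: "'m \<Rightarrow> real^'n \<Rightarrow> real^'n"
    and NU :: "real^'m \<Rightarrow> real"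
    and \<omega> :: "real^'m \<Rightarrow> real"
    and g\<omega> :: "real^'m \<Rightarrow> real^'m"
    and xstar :: "real^'n"
    and pinit :: "real^'m"
    and R0 \<Delta> Lf DP :: real
    and v :: "nat \<Rightarrow> 'm \<Rightarrow> real^'n"
    and c :: "nat \<Rightarrow> 'm \<Rightarrow> real"
    and M Mb \<beta> \<gamma> \<eta> \<theta> \<tau> :: "nat \<Rightarrow> real"
    and S :: "nat \<Rightarrow> nat"
    and \<delta> :: "nat \<Rightarrow> nat \<Rightarrow> real"
    and x xl xbar :: "nat \<Rightarrow> real^'n"
    and y :: "nat \<Rightarrow> nat \<Rightarrow> real^'n"
    and vt :: "nat \<Rightarrow> nat \<Rightarrow> real^'n"
    and p :: "nat \<Rightarrow> nat \<Rightarrow> real^'m"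
    and pm1 :: "nat \<Rightarrow> real^'m"
  \<comment> \<open>problem data\<close>
  assumes X_closed: "closed X" and X_convex: "convex X"
    and P_closed: "closed P" and P_convex: "convex P" and P_simplex: "P \<subseteq> prob_simplex"
    and \<rho>_proper: "eproper_on P \<rho>" and \<rho>_closed: "eclosed_on P \<rho>" and \<rho>_convex: "econvex_on P \<rho>"
    and u_proper: "eproper_on UNIV u" and u_closed: "eclosed_on UNIV u" and u_convex: "econvex_on UNIV u"
    and f_convex: "\<And>i. convex_on UNIV (f i)"
    and f_grad: "\<And>i z. (f i has_derivative (\<lambda>h. fg i z \<bullet> h)) (at z)"
    and f_lip: "\<And>i. \<exists>L. L-lipschitz_on UNIV (fg i)"
    and Lf_def: "Lf = Sup ((\<lambda>q. lip_const (\<lambda>z. \<Sum>i\<in>UNIV. (q $ i) *\<^sub>R fg i z)) ` P)"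
  \<comment> \<open>optimal solution (with finite optimal value)\<close>
    and xstar_in: "xstar \<in> X"
    and xstar_opt: "\<And>z. z \<in> X \<Longrightarrow> fobj P f \<rho> u xstar \<le> fobj P f \<rho> u z"
    and fstar_fin: "fobj P f \<rho> u xstar < \<infinity>"
  \<comment> \<open>Bregman distance on P, 1-strongly convex w.r.t. the norm NU\<close>
    and NU_norm: "is_norm NU"
    and \<omega>_diff: "\<And>q. q \<in> P \<Longrightarrow> (\<omega> has_derivative (\<lambda>h. g\<omega> q \<bullet> h)) (at q within P)"
    and \<omega>_strong: "\<And>q q'. q \<in> P \<Longrightarrow> q' \<in> P \<Longrightarrow>
                     \<omega> q \<ge> \<omega> q' + g\<omega> q' \<bullet> (q - q') + (NU (q - q'))\<^sup>2 / 2"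
    and DP_bdd: "bdd_above {sqrt (2 * breg \<omega> g\<omega> q q') | q q'. q \<in> P \<and> q' \<in> P}"
    and DP_def: "DP = Sup {sqrt (2 * breg \<omega> g\<omega> q q') | q q'. q \<in> P \<and> q' \<in> P}"
    and DP_pos: "DP > 0"
  \<comment> \<open>initialization\<close>
    and x0_in: "x 0 \<in> X" and pinit_in: "pinit \<in> P"
    and R0_pos: "R0 > 0" and R0_ge: "R0 \<ge> norm (x 0 - xstar)"
  \<comment> \<open>stepsizes\<close>
    and \<Delta>_pos: "\<Delta> > 0"
    and \<theta>_def: "\<And>t. \<theta> t = (real t - 1) / real t"
    and \<tau>_def: "\<And>t. \<tau> t = (real t - 1) / 2"
    and \<eta>_def: "\<And>t. \<eta> t = 2 * Lf / real t"
    and M_def: "\<And>t. M t = Mconst NU (v t)"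
    and M_pos: "\<And>t. t \<ge> 1 \<Longrightarrow> M t > 0"
    and S_def: "\<And>t. S t = nat \<lceil>real t * \<Delta> * M t\<rceil>"
    and Mb_def: "\<And>t. Mb t = real (S t) / (real t * \<Delta>)"
    and \<beta>_def: "\<And>t. \<beta> t = DP * Mb t / R0"
    and \<gamma>_def: "\<And>t. \<gamma> t = R0 * Mb t / DP"
    and \<delta>_def: "\<And>t s. \<delta> t s = (if s = 1 then (if t = 1 then 1 else Mb t / Mb (t - 1)) else 1)"
  \<comment> \<open>the smooth DRAO-S method (q_s^t = 1, w_t = t)\<close>
    and xl0: "xl 0 = x 0"
    and xl_def: "\<And>t. t \<ge> 1 \<Longrightarrow>
        xl t = (1 / (1 + \<tau> t)) *\<^sub>R ((x (t - 1) + \<theta> t *\<^sub>R (x (t - 1) - x (t - 2))) + \<tau> t *\<^sub>R xl (t - 1))"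
    and v_def: "\<And>t i. v t i = fg i (xl (if t = 0 then 1 else t))"
    and c_def: "\<And>t i. c t i = xl t \<bullet> v t i - f i (xl t)"
    and y10: "y 1 0 = x 0" and p10: "p 1 0 = pinit" and pm11: "pm1 1 = pinit"
    and yt0: "\<And>t. t \<ge> 2 \<Longrightarrow> y t 0 = y (t - 1) (S (t - 1))"
    and pt0: "\<And>t. t \<ge> 2 \<Longrightarrow> p t 0 = p (t - 1) (S (t - 1))"
    and pm1t: "\<And>t. t \<ge> 2 \<Longrightarrow> pm1 t = p (t - 1) (S (t - 1) - 1)"
    and vt_def: "\<And>t s. t \<ge> 1 \<Longrightarrow> 1 \<le> s \<Longrightarrow> s \<le> S t \<Longrightarrow>
        vt t s = (\<Sum>i\<in>UNIV. (p t (s - 1) $ i) *\<^sub>R v t i)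
               + \<delta> t s *\<^sub>R (\<Sum>i\<in>UNIV. (p t (s - 1) $ i - (if s = 1 then pm1 t else p t (s - 2)) $ i)
                                         *\<^sub>R v (if s = 1 then t - 1 else t) i)"
    and y_step: "\<And>t s. t \<ge> 1 \<Longrightarrow> 1 \<le> s \<Longrightarrow> s \<le> S t \<Longrightarrow>
        y t s \<in> X \<and> (\<forall>z\<in>X.
          ereal (y t s \<bullet> vt t s) + u (y t s)
            + ereal (\<beta> t / 2 * (norm (y t s - y t (s - 1)))\<^sup>2 + \<eta> t / 2 * (norm (y t s - x (t - 1)))\<^sup>2)
          \<le> ereal (z \<bullet> vt t s) + u z
            + ereal (\<beta> t / 2 * (norm (z - y t (s - 1)))\<^sup>2 + \<eta> t / 2 * (norm (z - x (t - 1)))\<^sup>2))"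
    and p_step: "\<And>t s. t \<ge> 1 \<Longrightarrow> 1 \<le> s \<Longrightarrow> s \<le> S t \<Longrightarrow>
        p t s \<in> P \<and> (\<forall>q\<in>P.
          ereal (\<Sum>i\<in>UNIV. q $ i * (v t i \<bullet> y t s - c t i)) - \<rho> q
            - ereal (\<gamma> t * breg \<omega> g\<omega> q (p t (s - 1)))
          \<le> ereal (\<Sum>i\<in>UNIV. p t s $ i * (v t i \<bullet> y t s - c t i)) - \<rho> (p t s)
            - ereal (\<gamma> t * breg \<omega> g\<omega> (p t s) (p t (s - 1))))"
    and x_def: "\<And>t. t \<ge> 1 \<Longrightarrow> x t = (1 / real (S t)) *\<^sub>R (\<Sum>s=1..S t. y t s)"
    and xbar_def: "\<And>N. xbar N = (1 / (\<Sum>t=1..N. real t)) *\<^sub>R (\<Sum>t=1..N. real t *\<^sub>R x t)"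
  shows "(\<forall>N\<ge>1. fobj P f \<rho> u (xbar N) - fobj P f \<rho> u xstar
            \<le> ereal (2 * Lf * R0\<^sup>2 / (real N * (real N + 1)) + 2 * DP * R0 / (real N * (real N + 1) * \<Delta>)))
       \<and> (\<exists>Mtil. \<forall>t\<ge>1. M t \<le> Mtil)
       \<and> (\<Delta> = DP / (Lf * R0) \<longrightarrow>
            (\<forall>N\<ge>1. fobj P f \<rho> u (xbar N) - fobj P f \<rho> u xstar
               \<le> ereal (4 * Lf * R0\<^sup>2 / (real N * (real N + 1)))))"
proof -
  interpret drao X P \<rho> u f fg NU \<omega> g\<omega> xstar pinit R0 \<Delta> Lf DP v c M Mb \<beta> \<gamma> \<eta> \<theta> \<tau> S \<delta> x xl xbar y vt p pm1
    by (rule drao.intro) (fact assms)+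
  show ?thesis
  proof (intro conjI allI impI)
    fix N :: nat assume "N \<ge> 1"
    then show "fobj P f \<rho> u (xbar N) - fobj P f \<rho> u xstar
            \<le> ereal (2 * Lf * R0\<^sup>2 / (real N * (real N + 1)) + 2 * DP * R0 / (real N * (real N + 1) * \<Delta>))"
      by (rule final_bound)
  next
    show "\<exists>Mtil. \<forall>t\<ge>1. M t \<le> Mtil" by (rule M_bounded)
  next
    fix N :: nat assume D: "\<Delta> = DP / (Lf * R0)" and N: "N \<ge> 1"
    show "fobj P f \<rho> u (xbar N) - fobj P f \<rho> u xstar \<le> ereal (4 * Lf * R0\<^sup>2 / (real N * (real N + 1)))"
      using final_bound[OF N] tuned_bound[OF D N] by simp
  qed
qed


end
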